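(* Let $D_1,D_2,D_3$ be three smooth strictly convex outer billiard tables and $T_1,T_2,T_3$ the respective outer billiard maps. Then the set of fixed points of $T_3\circ T_2\circ T_1$ has empty interior.
   Context: An outer billiard table is a strictly convex compact plane domain $D$ (here with smooth boundary). The outer billiard map $T$ is defined on the exterior of $D$: for $x$ outside $D$, take the right support line from $x$ to $D$ (from $x$'s viewpoint) and reflect $x$ in the support point to obtain $T(x)$. *)

theory Defs
  imports "HOL-Analysis.Analysis"
begin

definition cross2 :: "real^2 \<Rightarrow> real^2 \<Rightarrow> real" where
  "cross2 a b = a$1 * b$2 - a$2 * b$1"

definition smooth_curve :: "(real \<Rightarrow> real^2) \<Rightarrow> bool" where
  "smooth_curve \<gamma> \<longleftrightarrow>
     (\<exists>f :: nat \<Rightarrow> real \<Rightarrow> real^2. f 0 = \<gamma> \<and>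
        (\<forall>n t. (f n has_vector_derivative f (Suc n) t) (at t)))"

definition strictly_convex :: "(real^2) set \<Rightarrow> bool" where
  "strictly_convex D \<longleftrightarrow> convex D \<and>
     (\<forall>x\<in>D. \<forall>y\<in>D. x \<noteq> y \<longrightarrow> open_segment x y \<subseteq> interior D)"

definition smooth_boundary :: "(real^2) set \<Rightarrow> bool" where
  "smooth_boundary D \<longleftrightarrow>
     (\<exists>\<gamma>. smooth_curve \<gamma> \<and> (\<forall>t. \<gamma> (t + 1) = \<gamma> t) \<and> inj_on \<gamma> {0..<1} \<and>
          (\<forall>t. vector_derivative \<gamma> (at t) \<noteq> 0) \<and> \<gamma> ` {0..1} = frontier D)"

definition outer_billiard_table :: "(real^2) set \<Rightarrow> bool" where
  "outer_billiard_table D \<longleftrightarrow> compact D \<and> interior D \<noteq> {} \<and> strictly_convex D \<and>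
     smooth_boundary D"

text \<open>Right support point from x: the point p of D such that all of D lies to the
  left of (or on) the directed line from x through p.\<close>
definition right_support_point :: "(real^2) set \<Rightarrow> real^2 \<Rightarrow> real^2" where
  "right_support_point D x = (THE p. p \<in> D \<and> (\<forall>q\<in>D. cross2 (p - x) (q - x) \<ge> 0))"

text \<open>Outer billiard map (meaningful for x outside D): reflect x in the support point.\<close>
definition outer_billiard :: "(real^2) set \<Rightarrow> real^2 \<Rightarrow> real^2" where
  "outer_billiard D x = 2 *\<^sub>R right_support_point D x - x"

end

theory Submission
  imports Defs
begin

lemma inner2: "inner (a::real^2) b = a$1*b$1 + a$2*b$2"
  by (simp add: inner_vec_def sum_2)

lemma vec2_eq_iff: "(a::real^2) = b \<longleftrightarrow> a$1 = b$1 \<and> a$2 = b$2"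
  by (simp add: vec_eq_iff forall_2)

lemma norm2_sq: "norm (a::real^2) ^ 2 = a$1*a$1 + a$2*a$2"
  by (simp add: power2_norm_eq_inner inner2)

lemma cross2_same[simp]: "cross2 a a = 0"
  by (simp add: cross2_def)

lemma cross2_anti: "cross2 b a = - cross2 a b"
  by (simp add: cross2_def)

lemma cross2_add_left: "cross2 (a + b) c = cross2 a c + cross2 b c"
  by (simp add: cross2_def algebra_simps)
lemma cross2_add_right: "cross2 c (a + b) = cross2 c a + cross2 c b"
  by (simp add: cross2_def algebra_simps)
lemma cross2_diff_left: "cross2 (a - b) c = cross2 a c - cross2 b c"
  by (simp add: cross2_def algebra_simps)
lemma cross2_diff_right: "cross2 c (a - b) = cross2 c a - cross2 c b"
  by (simp add: cross2_def algebra_simps)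
lemma cross2_scale_left: "cross2 (r *\<^sub>R a) c = r * cross2 a c"
  by (simp add: cross2_def algebra_simps)
lemma cross2_scale_right: "cross2 c (r *\<^sub>R a) = r * cross2 c a"
  by (simp add: cross2_def algebra_simps)
lemma cross2_minus_left: "cross2 (- a) c = - cross2 a c"
  by (simp add: cross2_def algebra_simps)
lemma cross2_minus_right: "cross2 c (- a) = - cross2 c a"
  by (simp add: cross2_def algebra_simps)

lemmas cross2_lin = cross2_add_left cross2_add_right cross2_diff_left cross2_diff_right
  cross2_scale_left cross2_scale_right cross2_minus_left cross2_minus_right

lemma cross2_ident: "cross2 w u * inner n n = inner n w * cross2 n u - inner n u * cross2 n w"
  by (simp add: cross2_def inner2 algebra_simps)

definition rot2 :: "real^2 \<Rightarrow> real^2" where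
  "rot2 v = vector [- v$2, v$1]"

lemma rot2_nth[simp]: "rot2 v $ 1 = - v$2" "rot2 v $ 2 = v$1"
  by (simp_all add: rot2_def)

lemma cross2_rot2: "cross2 v (rot2 v) = norm v ^ 2"
  by (simp add: cross2_def norm2_sq)

lemma norm_rot2: "norm (rot2 v) = norm v"
proof -
  have "norm (rot2 v) ^ 2 = norm v ^ 2" by (simp add: norm2_sq algebra_simps)
  then show ?thesis by (simp add: power2_eq_iff_nonneg)
qed

lemma cross2_eq_0_parallel:
  assumes "cross2 v u = 0" "v \<noteq> 0"
  shows "u = (inner u v / inner v v) *\<^sub>R v"
proof -
  have vv: "inner v v \<noteq> 0" using assms(2) by simp
  have "inner v v *\<^sub>R u = inner u v *\<^sub>R v"
    using assms(1) by (simp add: vec2_eq_iff inner2 cross2_def algebra_simps)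
  then have "u = inverse (inner v v) *\<^sub>R (inner u v *\<^sub>R v)"
    using vv by (metis scaleR_scaleR left_inverse scaleR_one)
  then show ?thesis by (simp add: divide_inverse_commute)
qed

lemma continuous_on_cross2[continuous_intros]:
  assumes "continuous_on S f" "continuous_on S g"
  shows "continuous_on S (\<lambda>x. cross2 (f x) (g x))"
  unfolding cross2_def by (intro continuous_intros assms)


definition sp_ok :: "(real^2) set \<Rightarrow> real^2 \<Rightarrow> real^2 \<Rightarrow> bool" where
  "sp_ok D x p \<longleftrightarrow> p \<in> D \<and> (\<forall>q\<in>D. cross2 (p - x) (q - x) \<ge> 0)"

lemma table_props:
  assumes "outer_billiard_table D"
  shows "compact D" "convex D" "D \<noteq> {}" "closed D" "interior D \<noteq> {}"
    "\<And>x y. x \<in> D \<Longrightarrow> y \<in> D \<Longrightarrow> x \<noteq> y \<Longrightarrow> open_segment x y \<subseteq> interior D"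
  using assms unfolding outer_billiard_table_def strictly_convex_def
  by (auto simp: compact_imp_closed)

lemma interior_not_on_line:
  fixes D :: "(real^2) set"
  assumes "m \<in> interior D" "cross2 (p - x) (m - x) = 0" "p \<noteq> x"
  shows "\<exists>q\<in>D. cross2 (p - x) (q - x) < 0"
proof -
  obtain r where r: "r > 0" "ball m r \<subseteq> D" using assms(1) by (meson mem_interior)
  have np: "norm (p - x) > 0" using assms(3) by simp
  define e where "e = r / (2 * norm (p - x))"
  have e: "e > 0" using r np by (simp add: e_def)
  define q where "q = m - e *\<^sub>R rot2 (p - x)"
  have "dist m q = e * norm (p - x)" using e by (simp add: q_def dist_norm norm_rot2)
  also have "\<dots> = r / 2" using np by (simp add: e_def)
  finally have "q \<in> D" using r by auto
  moreover have "cross2 (p - x) (q - x) = - e * norm (p - x) ^ 2"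
  proof -
    have "q - x = (m - x) - e *\<^sub>R rot2 (p - x)" by (simp add: q_def)
    then show ?thesis using assms(2) by (simp add: cross2_lin cross2_rot2)
  qed
  moreover have "- e * norm (p - x) ^ 2 < 0" using e np by simp
  ultimately show ?thesis by (intro bexI[of _ q]) auto
qed

lemma sp_unique:
  assumes T: "outer_billiard_table D" and x: "x \<notin> D"
    and p: "sp_ok D x p" and p': "sp_ok D x p'"
  shows "p = p'"
proof (rule ccontr)
  assume ne: "p \<noteq> p'"
  have pD: "p \<in> D" "p' \<in> D" using p p' by (auto simp: sp_ok_def)
  have c1: "cross2 (p - x) (p' - x) \<ge> 0" using p pD by (auto simp: sp_ok_def)
  have c2: "cross2 (p' - x) (p - x) \<ge> 0" using p' pD by (auto simp: sp_ok_def)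
  have c0: "cross2 (p - x) (p' - x) = 0" using c1 c2 cross2_anti[of "p' - x" "p - x"] by linarith
  define m where "m = midpoint p p'"
  have "m \<in> open_segment p p'" using ne by (simp add: m_def midpoint_in_open_segment)
  then have mi: "m \<in> interior D" using table_props(6)[OF T pD ne] by auto
  have "m - x = (1/2) *\<^sub>R (p - x) + (1/2) *\<^sub>R (p' - x)"
    by (simp add: m_def midpoint_def vec2_eq_iff algebra_simps)
  then have "cross2 (p - x) (m - x) = 0" using c0 by (simp add: cross2_lin)
  moreover have "p \<noteq> x" using pD x by auto
  ultimately obtain q where "q \<in> D" "cross2 (p - x) (q - x) < 0"
    using interior_not_on_line[OF mi] by blast
  then show False using p by (auto simp: sp_ok_def)
qed

lemma sp_exists:
  assumes T: "outer_billiard_table D" and x: "x \<notin> D"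
  shows "\<exists>p. sp_ok D x p"
proof -
  have D: "compact D" "convex D" "D \<noteq> {}" "closed D" using table_props[OF T] by auto
  obtain a b where ab: "inner a x < b" "\<forall>y\<in>D. inner a y > b"
    using separating_hyperplane_closed_point[OF D(2) D(4) x] by blast
  have pos: "inner a (q - x) > 0" if "q \<in> D" for q
    using ab that by (auto simp: inner_diff_right)
  have a0: "a \<noteq> 0" using pos D(3) by fastforce
  define phi where "phi q = cross2 a (q - x) / inner a (q - x)" for q
  have cont: "continuous_on D phi" unfolding phi_def
    by (intro continuous_intros) (use pos in force)
  obtain p where pD: "p \<in> D" and pmin: "\<forall>q\<in>D. phi p \<le> phi q"
    using continuous_attains_inf[OF D(1) D(3) cont] by blast
  have "cross2 (p - x) (q - x) \<ge> 0" if qD: "q \<in> D" for q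
  proof -
    have "phi p \<le> phi q" using pmin qD by auto
    then have "cross2 a (p - x) * inner a (q - x) \<le> cross2 a (q - x) * inner a (p - x)"
      using pos[OF pD] pos[OF qD] by (simp add: phi_def divide_simps)
    then have "cross2 (p - x) (q - x) * inner a a \<ge> 0"
      using cross2_ident[of "p - x" "q - x" a] by (simp add: algebra_simps)
    moreover have "inner a a > 0" using a0 by simp
    ultimately show ?thesis by (simp add: zero_le_mult_iff)
  qed
  then show ?thesis using pD unfolding sp_ok_def by blast
qed

definition rsp where "rsp = right_support_point"

lemma rsp_ok:
  assumes T: "outer_billiard_table D" and x: "x \<notin> D"
  shows "sp_ok D x (right_support_point D x)"
proof -
  have "\<exists>!p. sp_ok D x p" using sp_exists[OF T x] sp_unique[OF T x] by blast
  then have "sp_ok D x (THE p. sp_ok D x p)" by (rule theI')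
  then show ?thesis unfolding right_support_point_def sp_ok_def by simp
qed

lemma rsp_eq:
  assumes T: "outer_billiard_table D" and x: "x \<notin> D" and p: "sp_ok D x p"
  shows "right_support_point D x = p"
  using sp_unique[OF T x rsp_ok[OF T x] p] .

lemma rsp_frontier:
  assumes T: "outer_billiard_table D" and x: "x \<notin> D"
  shows "right_support_point D x \<in> frontier D"
proof -
  let ?p = "right_support_point D x"
  have ok: "sp_ok D x ?p" by (rule rsp_ok[OF T x])
  then have pD: "?p \<in> D" by (simp add: sp_ok_def)
  have "?p \<notin> interior D"
  proof
    assume "?p \<in> interior D"
    moreover have "?p \<noteq> x" using pD x by auto
    ultimately obtain q where "q \<in> D" "cross2 (?p - x) (q - x) < 0"
      using interior_not_on_line[of ?p D ?p x] by auto
    then show False using ok by (auto simp: sp_ok_def)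
  qed
  then show ?thesis using pD table_props(4)[OF T] by (simp add: frontier_def closure_closed)
qed


lemma linear_cross2_right: "linear (cross2 c)"
  by (rule linearI) (simp_all add: cross2_lin)

lemma bilinear_cross2: "bilinear cross2"
  unfolding bilinear_def
proof (intro allI conjI)
  fix x y :: "real^2"
  show "linear (\<lambda>y. cross2 x y)" by (rule linearI) (simp_all add: cross2_lin)
  show "linear (\<lambda>x. cross2 x y)" by (rule linearI) (simp_all add: cross2_lin)
qed

lemma bounded_bilinear_cross2: "bounded_bilinear cross2"
  using bilinear_cross2 bilinear_conv_bounded_bilinear by blast

lemma has_derivative_cross2[derivative_intros]:
  assumes "(f has_derivative f') (at x within s)" "(g has_derivative g') (at x within s)"
  shows "((\<lambda>x. cross2 (f x) (g x)) has_derivative (\<lambda>h. cross2 (f x) (g' h) + cross2 (f' h) (g x))) (at x within s)"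
  using bounded_bilinear.FDERIV[OF bounded_bilinear_cross2 assms] .

lemma cross2_zero[simp]: "cross2 0 a = 0" "cross2 a 0 = 0"
  by (simp_all add: cross2_def)

definition curve_of :: "(real^2) set \<Rightarrow> (real \<Rightarrow> real^2) \<Rightarrow> (real \<Rightarrow> real^2) \<Rightarrow> (real \<Rightarrow> real^2) \<Rightarrow> bool" where
  "curve_of D g g1 g2 \<longleftrightarrow> (\<forall>t. (g has_vector_derivative g1 t) (at t)) \<and>
     (\<forall>t. (g1 has_vector_derivative g2 t) (at t)) \<and> (\<forall>t. isCont g2 t) \<and> (\<forall>t. g (t + 1) = g t) \<and>
     inj_on g {0..<1} \<and> (\<forall>t. g1 t \<noteq> 0) \<and> g ` {0..1} = frontier D"

lemma table_curve:
  assumes "outer_billiard_table D"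
  shows "\<exists>g g1 g2. curve_of D g g1 g2"
proof -
  obtain g where g: "smooth_curve g" "\<forall>t. g (t + 1) = g t" "inj_on g {0..<1}"
    "\<forall>t. vector_derivative g (at t) \<noteq> 0" "g ` {0..1} = frontier D"
    using assms unfolding outer_billiard_table_def smooth_boundary_def by blast
  obtain f :: "nat \<Rightarrow> real \<Rightarrow> real^2" where f: "f 0 = g" "\<forall>n t. (f n has_vector_derivative f (Suc n) t) (at t)"
    using g(1) unfolding smooth_curve_def by blast
  have "\<forall>t. (f 0 has_vector_derivative f (Suc 0) t) (at t)" using f(2) by blast
  then have d1: "\<forall>t. (g has_vector_derivative f 1 t) (at t)" using f(1) by simp
  have "\<forall>t. (f (Suc 0) has_vector_derivative f (Suc (Suc 0)) t) (at t)" using f(2) by blast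
  then have d2: "\<forall>t. (f 1 has_vector_derivative f 2 t) (at t)" by (simp add: numeral_2_eq_2)
  have "\<forall>t. (f (Suc (Suc 0)) has_vector_derivative f (Suc (Suc (Suc 0))) t) (at t)" using f(2) by blast
  then have "\<forall>t. isCont (f (Suc (Suc 0))) t" using has_vector_derivative_continuous by blast
  then have c2: "\<forall>t. isCont (f 2) t" by (simp add: numeral_2_eq_2)
  have "vector_derivative g (at t) = f 1 t" for t using d1 vector_derivative_at by blast
  then have "\<forall>t. f 1 t \<noteq> 0" using g(4) by metis
  then show ?thesis using d1 d2 c2 g unfolding curve_of_def by blast
qed

context
  fixes D g g1 g2
  assumes cv: "curve_of D g g1 g2"
begin

lemma cv_deriv: "(g has_vector_derivative g1 t) (at t)"
  using cv by (simp add: curve_of_def)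
lemma cv_deriv2: "(g1 has_vector_derivative g2 t) (at t)"
  using cv by (simp add: curve_of_def)
lemma cv_isCont2: "isCont g2 t"
  using cv by (simp add: curve_of_def)
lemma cv_cont2: "continuous_on S g2"
  using cv_isCont2 by (simp add: continuous_at_imp_continuous_on)
lemma cv_nz: "g1 t \<noteq> 0"
  using cv by (simp add: curve_of_def)
lemma cv_cont: "continuous_on S g"
  using cv_deriv by (intro continuous_at_imp_continuous_on ballI has_vector_derivative_continuous) blast
lemma cv_cont1: "continuous_on S g1"
  using cv_deriv2 by (intro continuous_at_imp_continuous_on ballI has_vector_derivative_continuous) blast
lemma cv_isCont: "isCont g t"
  using cv_deriv has_vector_derivative_continuous by blast

lemma cv_per_nat: "g (t + real n) = g t"
proof (induction n arbitrary: t)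
  case (Suc n)
  have "g (t + real (Suc n)) = g ((t + real n) + 1)" by (simp add: algebra_simps)
  also have "\<dots> = g (t + real n)" using cv by (simp add: curve_of_def)
  finally show ?case using Suc by simp
qed simp

lemma cv_per_int: "g (t + real_of_int n) = g t"
proof (cases "n \<ge> 0")
  case True
  then obtain m where "n = int m" by (intro that[of "nat n"]) simp
  then show ?thesis using cv_per_nat by simp
next
  case False
  then obtain m where m: "n = - int m" by (intro that[of "nat (- n)"]) simp
  have "g ((t - real m) + real m) = g (t - real m)" by (rule cv_per_nat)
  then show ?thesis using m by simp
qed

lemma cv_frac: "g t = g (frac t)"
proof -
  have e: "frac t + real_of_int (floor t) = t" by (simp add: frac_def)
  have "g (frac t + real_of_int (floor t)) = g (frac t)" by (rule cv_per_int)
  then show ?thesis by (simp only: e)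
qed

lemma cv_image: "g ` UNIV = frontier D"
proof -
  have "g ` UNIV \<subseteq> g ` {0..1}"
  proof
    fix y assume "y \<in> g ` UNIV"
    then obtain t where "y = g t" by auto
    then have "y = g (frac t)" using cv_frac by simp
    moreover have "frac t \<in> {0..1}" using frac_lt_1[of t] frac_ge_0[of t] by auto
    ultimately show "y \<in> g ` {0..1}" by auto
  qed
  moreover have "frontier D \<subseteq> g ` UNIV" using cv unfolding curve_of_def by blast
  moreover have "g ` {0..1} = frontier D" using cv unfolding curve_of_def by blast
  ultimately show ?thesis by blast
qed

lemma cv_in_frontier: "g t \<in> frontier D"
  using cv_image by auto

lemma cv_eq_imp_int: assumes "g s = g s'" shows "\<exists>n::int. s = s' + real_of_int n"
proof -
  have "g (frac s) = g (frac s')" using assms cv_frac by metis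
  moreover have "frac s \<in> {0..<1}" "frac s' \<in> {0..<1}" using frac_lt_1 frac_ge_0 by auto
  ultimately have "frac s = frac s'" using cv by (auto simp: curve_of_def inj_on_def)
  then have "s = s' + real_of_int (floor s - floor s')" by (simp add: frac_def)
  then show ?thesis by blast
qed

lemma cv_inj_window: assumes "\<bar>s - s'\<bar> < 1" "g s = g s'" shows "s = s'"
proof -
  obtain n :: int where n: "s = s' + real_of_int n" using cv_eq_imp_int[OF assms(2)] by blast
  then have "\<bar>real_of_int n\<bar> < 1" using assms(1) by simp
  then have "n = 0" by linarith
  then show ?thesis using n by simp
qed

lemma cv_tangent:
  assumes T: "outer_billiard_table D" and x: "x \<notin> D" and pt: "right_support_point D x = g t"
  shows "cross2 (g1 t) (g t - x) = 0"
proof -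
  let ?p = "g t"
  have ok: "sp_ok D x ?p" using rsp_ok[OF T x] pt by simp
  have fD: "frontier D \<subseteq> D" using table_props(4)[OF T] by (simp add: frontier_subset_closed)
  define h where "h s = cross2 (?p - x) (g s - x)" for s
  have hge: "h s \<ge> 0" for s using ok cv_in_frontier[of s] fD by (auto simp: sp_ok_def h_def)
  have ht: "h t = 0" by (simp add: h_def)
  have d0: "((\<lambda>s. g s - x) has_derivative (\<lambda>r. r *\<^sub>R g1 t - 0)) (at t)"
    using cv_deriv[of t] unfolding has_vector_derivative_def by (intro has_derivative_diff has_derivative_const)
  have "(h has_derivative (\<lambda>r. cross2 (?p - x) (r *\<^sub>R g1 t - 0) + cross2 0 (g t - x))) (at t)"
    unfolding h_def by (rule has_derivative_cross2[OF has_derivative_const d0])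
  moreover have "(\<lambda>r. cross2 (?p - x) (r *\<^sub>R g1 t - 0) + cross2 0 (g t - x)) = (*) (cross2 (?p - x) (g1 t))"
    by (rule ext) (simp add: cross2_lin)
  ultimately have "(h has_real_derivative cross2 (?p - x) (g1 t)) (at t)"
    unfolding has_field_derivative_def by simp
  moreover have "\<forall>y. \<bar>t - y\<bar> < 1 \<longrightarrow> h t \<le> h y" using hge ht by simp
  ultimately have "cross2 (?p - x) (g1 t) = 0" using DERIV_local_min[of h _ t 1] by simp
  then show ?thesis using cross2_anti by (metis neg_equal_0_iff_equal)
qed

end


lemma rsp_cont:
  assumes T: "outer_billiard_table D"
  shows "continuous_on (- D) (right_support_point D)"
proof -
  have cD: "compact D" using table_props(1)[OF T] .
  let ?f = "right_support_point D"
  have fim: "?f \<in> (- D) \<rightarrow> D"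
  proof
    fix x assume "x \<in> - D"
    then have "sp_ok D x (?f x)" using rsp_ok[OF T] by simp
    then show "?f x \<in> D" by (simp add: sp_ok_def)
  qed
  define C where "C = (\<Inter>q\<in>D. {z :: (real^2) \<times> (real^2). cross2 (snd z - fst z) (q - fst z) \<ge> 0})"
  have clq: "closed {z :: (real^2) \<times> (real^2). cross2 (snd z - fst z) (q - fst z) \<ge> 0}" for q
  proof -
    have "continuous_on UNIV (\<lambda>z :: (real^2) \<times> (real^2). cross2 (snd z - fst z) (q - fst z))"
      by (intro continuous_on_cross2 continuous_on_diff continuous_on_snd continuous_on_fst continuous_on_id continuous_on_const)
    then show ?thesis using closed_Collect_le[OF continuous_on_const] by blast
  qed
  have clC: "closed C" unfolding C_def by (rule closed_INT) (use clq in blast)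
  have eq: "(\<lambda>x. (x, ?f x)) ` (- D) = ((- D) \<times> D) \<inter> C"
  proof
    show "(\<lambda>x. (x, ?f x)) ` (- D) \<subseteq> ((- D) \<times> D) \<inter> C"
    proof
      fix z assume "z \<in> (\<lambda>x. (x, ?f x)) ` (- D)"
      then obtain x where x: "x \<notin> D" and zx: "z = (x, ?f x)" by blast
      have ok: "sp_ok D x (?f x)" by (rule rsp_ok[OF T x])
      then have "?f x \<in> D" "\<forall>q\<in>D. 0 \<le> cross2 (?f x - x) (q - x)" by (simp_all add: sp_ok_def)
      then show "z \<in> ((- D) \<times> D) \<inter> C" using zx x by (simp add: C_def)
    qed
    show "((- D) \<times> D) \<inter> C \<subseteq> (\<lambda>x. (x, ?f x)) ` (- D)"
    proof
      fix z assume z: "z \<in> ((- D) \<times> D) \<inter> C"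
      obtain x p where zxp: "z = (x, p)" by (cases z)
      have x: "x \<notin> D" and "p \<in> D" using z zxp by auto
      moreover have "\<forall>q\<in>D. cross2 (p - x) (q - x) \<ge> 0" using z zxp by (auto simp: C_def)
      ultimately have "sp_ok D x p" by (simp add: sp_ok_def)
      then have "p = ?f x" using rsp_eq[OF T x] by simp
      then show "z \<in> (\<lambda>x. (x, ?f x)) ` (- D)" using zxp x by auto
    qed
  qed
  have "closedin (top_of_set ((- D) \<times> D)) ((\<lambda>x. (x, ?f x)) ` (- D))"
    unfolding eq by (rule closedin_closed_Int[OF clC])
  then show ?thesis by (rule continuous_closed_graph_eq[OF cD fim, THEN iffD2])
qed

lemma rsp_isCont:
  assumes T: "outer_billiard_table D" and x: "x \<notin> D"
  shows "isCont (right_support_point D) x"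
proof -
  have "open (- D)" using table_props(4)[OF T] by (simp add: open_Compl)
  then show ?thesis using rsp_cont[OF T] x continuous_on_eq_continuous_at[of "- D" "right_support_point D"] by simp
qed

lemma local_param:
  assumes T: "outer_billiard_table D" and cv: "curve_of D g g1 g2"
    and x0: "x0 \<notin> D" and pt: "right_support_point D x0 = g t0"
  shows "\<exists>N \<tau>. open N \<and> x0 \<in> N \<and> N \<subseteq> - D \<and> continuous_on N \<tau> \<and> \<tau> x0 = t0 \<and>
     (\<forall>x\<in>N. g (\<tau> x) = right_support_point D x \<and> \<bar>\<tau> x - t0\<bar> \<le> 1/4)"
proof -
  let ?f = "right_support_point D"
  define K where "K = {t0 - 1/4 .. t0 + 1/4}"
  define L where "L = {t0 - 1/2 .. t0 - 1/4} \<union> {t0 + 1/4 .. t0 + 1/2}"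
  have injK: "inj_on g K"
  proof (rule inj_onI)
    fix s s' assume "s \<in> K" "s' \<in> K" "g s = g s'"
    moreover have "\<bar>s - s'\<bar> < 1" using \<open>s \<in> K\<close> \<open>s' \<in> K\<close>
      unfolding K_def atLeastAtMost_iff abs_less_iff by linarith
    ultimately show "s = s'" using cv_inj_window[OF cv] by blast
  qed
  have cK: "compact K" by (simp add: K_def)
  have contg: "continuous_on S g" for S using cv_cont[OF cv] .
  define ginv where "ginv = the_inv_into K g"
  have ginv_cont: "continuous_on (g ` K) ginv"
    unfolding ginv_def by (rule continuous_on_inv[OF contg cK]) (simp add: the_inv_into_f_f[OF injK])
  have cL: "compact (g ` L)" by (intro compact_continuous_image contg) (simp add: L_def compact_Un)
  have nL: "g t0 \<notin> g ` L"
  proof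
    assume "g t0 \<in> g ` L"
    then obtain s where s: "s \<in> L" "g t0 = g s" by auto
    then have "\<bar>t0 - s\<bar> < 1" unfolding L_def Un_iff atLeastAtMost_iff abs_less_iff by linarith
    then have "t0 = s" using cv_inj_window[OF cv _ s(2)] by simp
    then show False using s(1) unfolding L_def Un_iff atLeastAtMost_iff by linarith
  qed
  obtain d where d: "d > 0" "\<forall>c\<in>g ` L. d \<le> dist (g t0) c"
    using separate_point_closed[OF compact_imp_closed[OF cL] nL] by blast
  have opD: "open (- D)" using table_props(4)[OF T] by (simp add: open_Compl)
  obtain r1 where r1: "r1 > 0" "ball x0 r1 \<subseteq> - D" using opD x0 open_contains_ball_eq[of "- D" x0] by auto
  obtain r2 where r2: "r2 > 0" "\<forall>x. dist x x0 < r2 \<longrightarrow> dist (?f x) (?f x0) < d"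
  proof -
    have "\<forall>e>0. \<exists>\<delta>>0. \<forall>x'. dist x' x0 < \<delta> \<longrightarrow> dist (?f x') (?f x0) < e"
      using rsp_isCont[OF T x0] continuous_at_eps_delta by blast
    then show ?thesis using d(1) that by blast
  qed
  define N where "N = ball x0 (min r1 r2)"
  have NsD: "N \<subseteq> - D" using r1 by (auto simp: N_def)
  have inK: "?f x \<in> g ` K" if xN: "x \<in> N" for x
  proof -
    have xD: "x \<notin> D" using NsD xN by auto
    have "?f x \<in> frontier D" by (rule rsp_frontier[OF T xD])
    then obtain s where s: "?f x = g s" using cv_image[OF cv] by auto
    define s' where "s' = s - real_of_int (floor (s - t0 + 1/2))"
    have s's: "g s' = g s" using cv_per_int[OF cv, of s' "floor (s - t0 + 1/2)"] by (simp add: s'_def)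
    have fl: "real_of_int (floor (s - t0 + 1/2)) \<le> s - t0 + 1/2"
      "s - t0 + 1/2 < real_of_int (floor (s - t0 + 1/2)) + 1"
      by (rule of_int_floor_le, rule real_of_int_floor_add_one_gt)
    have s'range: "s' \<in> {t0 - 1/2 .. t0 + 1/2}"
      unfolding s'_def atLeastAtMost_iff using fl by linarith
    have "dist (?f x) (g t0) < d" using r2 xN pt by (auto simp: N_def dist_commute)
    then have "?f x \<notin> g ` L" using d(2) by (auto simp: dist_commute)
    then have "s' \<notin> L" using s s's by (metis image_eqI)
    then have "s' \<in> K" using s'range unfolding K_def L_def Un_iff atLeastAtMost_iff by linarith
    then show ?thesis using s s's by (metis image_eqI)
  qed
  define \<tau> where "\<tau> x = ginv (?f x)" for x
  have c1: "continuous_on N ?f" using rsp_cont[OF T] NsD by (rule continuous_on_subset)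
  have fN: "?f ` N \<subseteq> g ` K" using inK by blast
  have "continuous_on N (ginv \<circ> ?f)"
    by (rule continuous_on_compose[OF c1 continuous_on_subset[OF ginv_cont fN]])
  moreover have "ginv \<circ> ?f = \<tau>" by (simp add: \<tau>_def fun_eq_iff)
  ultimately have cont: "continuous_on N \<tau>" by simp
  have props: "g (\<tau> x) = ?f x \<and> \<bar>\<tau> x - t0\<bar> \<le> 1/4" if xN: "x \<in> N" for x
  proof -
    have "g (\<tau> x) = ?f x" unfolding \<tau>_def ginv_def by (rule f_the_inv_into_f[OF injK inK[OF xN]])
    moreover have "\<tau> x \<in> K" unfolding \<tau>_def ginv_def by (rule the_inv_into_into[OF injK inK[OF xN] subset_refl])
    ultimately show ?thesis unfolding K_def atLeastAtMost_iff abs_le_iff by auto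
  qed
  have t0K: "t0 \<in> K" by (simp add: K_def)
  have tx0: "\<tau> x0 = t0" unfolding \<tau>_def ginv_def pt by (rule the_inv_into_f_f[OF injK t0K])
  have x0N: "x0 \<in> N" using r1 r2 by (simp add: N_def)
  have oN: "open N" by (simp add: N_def)
  show ?thesis
    by (rule exI[of _ N], rule exI[of _ \<tau>]) (intro conjI oN x0N NsD cont tx0 ballI props)
qed


lemma vd_cross_real:
  assumes "(f has_vector_derivative f') (at t)" "(h has_vector_derivative h') (at t)"
  shows "((\<lambda>s. cross2 (f s) (h s)) has_real_derivative (cross2 (f t) h' + cross2 f' (h t))) (at t)"
proof -
  have "((\<lambda>s. cross2 (f s) (h s)) has_derivative (\<lambda>r. cross2 (f t) (r *\<^sub>R h') + cross2 (r *\<^sub>R f') (h t))) (at t)"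
    using has_derivative_cross2[of f "\<lambda>r. r *\<^sub>R f'" t UNIV h "\<lambda>r. r *\<^sub>R h'"] assms
    unfolding has_vector_derivative_def by blast
  moreover have "(\<lambda>r. cross2 (f t) (r *\<^sub>R h') + cross2 (r *\<^sub>R f') (h t)) = (*) (cross2 (f t) h' + cross2 f' (h t))"
    by (rule ext) (simp add: cross2_lin algebra_simps)
  ultimately show ?thesis unfolding has_field_derivative_def by simp
qed

lemma vd_inner_real:
  assumes "(f has_vector_derivative f') (at t)" "(h has_vector_derivative h') (at t)"
  shows "((\<lambda>s. inner (f s) (h s)) has_real_derivative (inner (f t) h' + inner f' (h t))) (at t)"
proof -
  have "((\<lambda>s. inner (f s) (h s)) has_derivative (\<lambda>r. inner (f t) (r *\<^sub>R h') + inner (r *\<^sub>R f') (h t))) (at t)"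
    using bounded_bilinear.FDERIV[OF bounded_bilinear_inner, of f "\<lambda>r. r *\<^sub>R f'" t UNIV h "\<lambda>r. r *\<^sub>R h'"] assms
    unfolding has_vector_derivative_def by blast
  moreover have "(\<lambda>r. inner (f t) (r *\<^sub>R h') + inner (r *\<^sub>R f') (h t)) = (*) (inner (f t) h' + inner f' (h t))"
    by (rule ext) (simp add: algebra_simps)
  ultimately show ?thesis unfolding has_field_derivative_def by simp
qed

lemma frontier_not_interior: "x \<in> frontier S \<Longrightarrow> x \<notin> interior S"
  by (simp add: frontier_def)

lemma no_flat:
  assumes T: "outer_billiard_table D" and cv: "curve_of D g g1 g2"
    and ab: "a < b" and flat: "\<forall>t\<in>{a..b}. cross2 (g1 t) (g2 t) = 0"
  shows False
proof -
  define b' where "b' = min b (a + 1/2)"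
  have ab': "a < b'" "b' \<le> b" "b' - a \<le> 1/2" using ab unfolding b'_def by (auto simp: min_def)
  define v0 where "v0 = g1 a"
  define c where "c t = cross2 v0 (g1 t)" for t
  define n where "n t = inner (g1 t) (g1 t)" for t
  define u where "u t = (c t * c t) / n t" for t
  have npos: "n t > 0" for t using cv_nz[OF cv] by (simp add: n_def)
  have dc: "(c has_real_derivative cross2 v0 (g2 t)) (at t)" for t
    using vd_cross_real[OF has_vector_derivative_const cv_deriv2[OF cv]] unfolding c_def[abs_def] by simp
  have dn: "(n has_real_derivative 2 * inner (g1 t) (g2 t)) (at t)" for t
    using vd_inner_real[OF cv_deriv2[OF cv] cv_deriv2[OF cv]] unfolding n_def[abs_def] by (simp add: inner_commute)
  have du: "(u has_real_derivative
      ((cross2 v0 (g2 t) * c t + cross2 v0 (g2 t) * c t) * n t - 2 * inner (g1 t) (g2 t) * (c t * c t)) / (n t)^2) (at t)" for t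
    unfolding u_def[abs_def] using DERIV_quotient[OF DERIV_mult[OF dc dc] dn] npos[of t] by (simp add: power2_eq_square)
  have du0: "(u has_real_derivative 0) (at t)" if "a < t" "t < b'" for t
  proof -
    have "cross2 (g1 t) (g2 t) = 0" using flat that ab' by auto
    then have g2eq: "g2 t = (inner (g2 t) (g1 t) / inner (g1 t) (g1 t)) *\<^sub>R g1 t"
      using cross2_eq_0_parallel cv_nz[OF cv] by blast
    define al where "al = inner (g2 t) (g1 t) / inner (g1 t) (g1 t)"
    have e1: "cross2 v0 (g2 t) = al * c t" unfolding c_def al_def by (subst g2eq) (simp add: cross2_lin)
    have e2: "inner (g1 t) (g2 t) = al * n t" unfolding n_def al_def using npos[of t]
      by (simp add: n_def inner_commute)
    have "((cross2 v0 (g2 t) * c t + cross2 v0 (g2 t) * c t) * n t - 2 * inner (g1 t) (g2 t) * (c t * c t)) = 0"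
      unfolding e1 e2 by (simp add: algebra_simps)
    then have h0: "((cross2 v0 (g2 t) * c t + cross2 v0 (g2 t) * c t) * n t - 2 * inner (g1 t) (g2 t) * (c t * c t)) / (n t)^2 = 0"
      by simp
    show ?thesis using du[of t] unfolding h0 .
  qed
  have ucont: "continuous_on {a..b'} u"
    using du by (meson DERIV_isCont continuous_at_imp_continuous_on)
  have ua: "u a = 0" by (simp add: u_def c_def v0_def)
  have c0: "c t = 0" if "a \<le> t" "t \<le> b'" for t
  proof -
    have "u t = u a" by (rule DERIV_isconst2[OF ab'(1) ucont du0 that])
    then have "c t * c t / n t = 0" using ua by (simp add: u_def)
    then show ?thesis using npos[of t] by simp
  qed
  define psi where "psi t = cross2 v0 (g t - g a)" for t
  have dpsi: "(psi has_real_derivative c t) (at t)" for t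
  proof -
    have "((\<lambda>s. g s - g a) has_vector_derivative g1 t - 0) (at t)"
      by (intro has_vector_derivative_diff cv_deriv[OF cv] has_vector_derivative_const)
    from vd_cross_real[OF has_vector_derivative_const this] show ?thesis unfolding psi_def[abs_def] c_def by simp
  qed
  have psicont: "continuous_on {a..b'} psi"
    using dpsi by (meson DERIV_isCont continuous_at_imp_continuous_on)
  have psi0: "psi t = 0" if "a \<le> t" "t \<le> b'" for t
  proof -
    have "psi t = psi a"
    proof (rule DERIV_isconst2[OF ab'(1) psicont _ that])
      fix x assume "a < x" "x < b'"
      then have "c x = 0" using c0 by simp
      then show "(psi has_real_derivative 0) (at x)" using dpsi[of x] by simp
    qed
    then show ?thesis by (simp add: psi_def)
  qed
  have v0nz: "v0 \<noteq> 0" using cv_nz[OF cv] by (simp add: v0_def)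
  define s where "s t = inner (g t - g a) v0" for t
  have par: "g t - g a = (s t / inner v0 v0) *\<^sub>R v0" if "a \<le> t" "t \<le> b'" for t
    using cross2_eq_0_parallel[OF _ v0nz] psi0[OF that] by (simp add: psi_def s_def)
  have scont: "continuous_on {a..b'} s" unfolding s_def
    by (intro continuous_intros cv_cont[OF cv])
  have gne: "g b' \<noteq> g a"
  proof
    assume "g b' = g a"
    moreover have "\<bar>b' - a\<bar> < 1" using ab' by simp
    ultimately have "b' = a" using cv_inj_window[OF cv] by blast
    then show False using ab' by simp
  qed
  have sb: "s b' \<noteq> 0" using par[of b'] ab' gne by auto
  have sa: "s a = 0" by (simp add: s_def)
  obtain t where t: "a \<le> t" "t \<le> b'" "s t = s b' / 2"
  proof (cases "s b' > 0")
    case True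
    then show ?thesis using IVT'[of s a "s b' / 2" b'] sa scont ab' that by auto
  next
    case False
    then show ?thesis using IVT2'[of s b' "s b' / 2" a] sa scont ab' that by auto
  qed
  have "g t - g a = (1/2) *\<^sub>R (g b' - g a)"
    using par[OF t(1,2)] par[of b'] ab' t(3) by simp
  then have gt: "g t = midpoint (g a) (g b')"
    by (simp add: midpoint_def vec2_eq_iff algebra_simps)
  have fD: "frontier D \<subseteq> D" using table_props(4)[OF T] by (simp add: frontier_subset_closed)
  have "g a \<in> D" "g b' \<in> D" using cv_in_frontier[OF cv] fD by auto
  then have "open_segment (g b') (g a) \<subseteq> interior D" using table_props(6)[OF T] gne by blast
  moreover have "midpoint (g a) (g b') \<in> open_segment (g b') (g a)"
    using gne by (metis midpoint_in_open_segment midpoint_sym)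
  ultimately have "g t \<in> interior D" using gt by auto
  then show False using frontier_not_interior cv_in_frontier[OF cv] by blast
qed


lemma tau_deriv:
  assumes T: "outer_billiard_table D" and cv: "curve_of D g g1 g2"
    and oN: "open N" and NsD: "N \<subseteq> - D" and ct: "continuous_on N \<tau>"
    and gt: "\<forall>x\<in>N. g (\<tau> x) = right_support_point D x" and xN: "x \<in> N"
    and k: "cross2 (g1 (\<tau> x)) (g2 (\<tau> x)) \<noteq> 0"
  shows "\<exists>L. (\<tau> has_derivative L) (at x)"
proof -
  define lam where "lam x' = inner (g (\<tau> x') - x') (g1 (\<tau> x')) / inner (g1 (\<tau> x')) (g1 (\<tau> x'))" for x'
  have tan: "g (\<tau> x') - x' = lam x' *\<^sub>R g1 (\<tau> x')" if "x' \<in> N" for x'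
  proof -
    have x'D: "x' \<notin> D" using that NsD by auto
    have "cross2 (g1 (\<tau> x')) (g (\<tau> x') - x') = 0"
      using cv_tangent[OF cv T x'D, of "\<tau> x'"] gt that by metis
    then show ?thesis unfolding lam_def using cross2_eq_0_parallel cv_nz[OF cv] by blast
  qed
  define \<sigma> where "\<sigma> x' = (\<tau> x', lam x')" for x'
  define \<Psi> where "\<Psi> w = g (fst w) - snd w *\<^sub>R g1 (fst w)" for w :: "real \<times> real"
  have \<Psi>\<sigma>: "\<Psi> (\<sigma> x') = x'" if "x' \<in> N" for x'
    using tan[OF that] by (simp add: \<Psi>_def \<sigma>_def algebra_simps)
  have cg: "continuous_on N (\<lambda>x'. g (\<tau> x'))" by (rule continuous_on_compose2[OF cv_cont[OF cv] ct]) auto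
  have cg1: "continuous_on N (\<lambda>x'. g1 (\<tau> x'))" by (rule continuous_on_compose2[OF cv_cont1[OF cv] ct]) auto
  have clam: "continuous_on N lam" unfolding lam_def
    by (intro continuous_intros cg cg1) (simp add: cv_nz[OF cv])
  have csig: "continuous_on N \<sigma>" unfolding \<sigma>_def by (intro continuous_intros ct clam)
  have csigx: "continuous (at x) \<sigma>" using csig oN xN continuous_on_eq_continuous_at by blast
  define t where "t = \<tau> x"
  define \<mu> where "\<mu> = lam x"
  have xD: "x \<notin> D" using xN NsD by auto
  have "g t \<in> D" using rsp_ok[OF T xD] gt xN by (simp add: t_def sp_ok_def)
  then have "g t \<noteq> x" using xD by auto
  then have mu0: "\<mu> \<noteq> 0" using tan[OF xN] by (auto simp: t_def \<mu>_def)
  have sx: "\<sigma> x = (t, \<mu>)" by (simp add: \<sigma>_def t_def \<mu>_def)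
  have dfst: "(fst has_derivative fst) (at (t, \<mu>))" by (rule bounded_linear_imp_has_derivative[OF bounded_linear_fst])
  have dsnd: "(snd has_derivative snd) (at (t, \<mu>))" by (rule bounded_linear_imp_has_derivative[OF bounded_linear_snd])
  have dg: "(g has_derivative (\<lambda>r. r *\<^sub>R g1 t)) (at (fst (t, \<mu>)))"
    using cv_deriv[OF cv, of t] by (simp add: has_vector_derivative_def)
  have dg1: "(g1 has_derivative (\<lambda>r. r *\<^sub>R g2 t)) (at (fst (t, \<mu>)))"
    using cv_deriv2[OF cv, of t] by (simp add: has_vector_derivative_def)
  have d1: "((g \<circ> fst) has_derivative ((\<lambda>r. r *\<^sub>R g1 t) \<circ> fst)) (at (t, \<mu>))"
    by (rule diff_chain_at[OF dfst dg])
  have d2: "((g1 \<circ> fst) has_derivative ((\<lambda>r. r *\<^sub>R g2 t) \<circ> fst)) (at (t, \<mu>))"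
    by (rule diff_chain_at[OF dfst dg1])
  have d3: "((\<lambda>w. snd w *\<^sub>R (g1 \<circ> fst) w) has_derivative
      (\<lambda>h. snd (t, \<mu>) *\<^sub>R ((\<lambda>r. r *\<^sub>R g2 t) \<circ> fst) h + snd h *\<^sub>R (g1 \<circ> fst) (t, \<mu>))) (at (t, \<mu>))"
    by (rule has_derivative_scaleR[OF dsnd d2])
  define D0 where "D0 h = ((\<lambda>r. r *\<^sub>R g1 t) \<circ> fst) h - (snd (t, \<mu>) *\<^sub>R ((\<lambda>r. r *\<^sub>R g2 t) \<circ> fst) h + snd h *\<^sub>R (g1 \<circ> fst) (t, \<mu>))" for h :: "real \<times> real"
  have dPsi: "(\<Psi> has_derivative D0) (at (\<sigma> x))"
  proof -
    have "((\<lambda>w. (g \<circ> fst) w - snd w *\<^sub>R (g1 \<circ> fst) w) has_derivative D0) (at (t, \<mu>))"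
      unfolding D0_def[abs_def] by (rule has_derivative_diff[OF d1 d3])
    moreover have "(\<lambda>w. (g \<circ> fst) w - snd w *\<^sub>R (g1 \<circ> fst) w) = \<Psi>" by (simp add: \<Psi>_def[abs_def] o_def)
    ultimately show ?thesis using sx by simp
  qed
  define a where "a = g1 t - \<mu> *\<^sub>R g2 t"
  define c where "c = g1 t"
  define \<Delta> where "\<Delta> = cross2 a c"
  have Dne: "\<Delta> \<noteq> 0"
  proof -
    have "\<Delta> = \<mu> * cross2 (g1 t) (g2 t)" unfolding \<Delta>_def a_def c_def
      by (simp add: cross2_lin cross2_anti[of "g2 t" "g1 t"])
    then show ?thesis using mu0 k by (simp add: t_def)
  qed
  define g' where "g' b = (cross2 b c / \<Delta>, - cross2 a b / \<Delta>)" for b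
  have blg': "bounded_linear g'"
  proof -
    have "bounded_linear (\<lambda>b. cross2 b c)" by (rule bounded_bilinear.bounded_linear_left[OF bounded_bilinear_cross2])
    then have l1: "bounded_linear (\<lambda>b. cross2 b c / \<Delta>)" by (rule bounded_linear_compose[OF bounded_linear_divide])
    have "bounded_linear (\<lambda>b. cross2 a b)" by (rule bounded_bilinear.bounded_linear_right[OF bounded_bilinear_cross2])
    then have "bounded_linear (\<lambda>b. - cross2 a b)" by (rule bounded_linear_minus)
    then have l2: "bounded_linear (\<lambda>b. - cross2 a b / \<Delta>)" by (rule bounded_linear_compose[OF bounded_linear_divide])
    show ?thesis unfolding g'_def[abs_def] by (rule bounded_linear_Pair[OF l1 l2])
  qed
  have inv: "g' \<circ> D0 = id"
  proof
    fix h :: "real \<times> real"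
    obtain h1 h2 where h: "h = (h1, h2)" by (cases h)
    have D0h: "D0 h = h1 *\<^sub>R a - h2 *\<^sub>R c" by (simp add: D0_def h a_def c_def algebra_simps)
    have "cross2 (D0 h) c = h1 * \<Delta>" unfolding D0h \<Delta>_def by (simp add: cross2_lin c_def)
    moreover have "cross2 a (D0 h) = - h2 * \<Delta>" unfolding D0h \<Delta>_def by (simp add: cross2_lin c_def)
    ultimately show "(g' \<circ> D0) h = id h" using Dne by (simp add: g'_def h)
  qed
  have "(\<sigma> has_derivative g') (at x)"
    by (rule has_derivative_inverse_basic[OF dPsi blg' inv csigx oN xN \<Psi>\<sigma>])
  then have "((\<lambda>x'. fst (\<sigma> x')) has_derivative (\<lambda>h. fst (g' h))) (at x)" by (rule has_derivative_fst)
  then show ?thesis by (auto simp: \<sigma>_def)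
qed


lemma ob_inj:
  assumes T: "outer_billiard_table D" and x: "x \<notin> D" and x': "x' \<notin> D"
    and eq: "outer_billiard D x = outer_billiard D x'"
  shows "x = x'"
proof -
  let ?p = "right_support_point D x" and ?p' = "right_support_point D x'"
  define y where "y = outer_billiard D x"
  have ok: "sp_ok D x ?p" "sp_ok D x' ?p'" by (rule rsp_ok[OF T x], rule rsp_ok[OF T x'])
  have y1: "y = 2 *\<^sub>R ?p - x" and y2: "y = 2 *\<^sub>R ?p' - x'"
    using eq by (simp_all add: y_def outer_billiard_def)
  have A: "cross2 (y - ?p) (q - ?p) \<ge> 0" if "q \<in> D" for q
  proof -
    have "cross2 (?p - x) (q - x) \<ge> 0" using ok(1) that by (simp add: sp_ok_def)
    moreover have "cross2 (y - ?p) (q - ?p) = cross2 (?p - x) (q - x)"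
      unfolding y1 by (simp add: cross2_def algebra_simps)
    ultimately show ?thesis by simp
  qed
  have B: "cross2 (y - ?p') (q - ?p') \<ge> 0" if "q \<in> D" for q
  proof -
    have "cross2 (?p' - x') (q - x') \<ge> 0" using ok(2) that by (simp add: sp_ok_def)
    moreover have "cross2 (y - ?p') (q - ?p') = cross2 (?p' - x') (q - x')"
      unfolding y2 by (simp add: cross2_def algebra_simps)
    ultimately show ?thesis by simp
  qed
  have pD: "?p \<in> D" "?p' \<in> D" using ok by (auto simp: sp_ok_def)
  have ypx: "y - ?p = ?p - x" using y1 by (simp add: vec2_eq_iff)
  have px: "?p \<noteq> x" using pD x by auto
  have yp: "y \<noteq> ?p"
  proof
    assume "y = ?p"
    then have "?p - x = 0" using ypx by simp
    then show False using px by simp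
  qed
  have pp: "?p = ?p'"
  proof (rule ccontr)
    assume ne: "?p \<noteq> ?p'"
    have c1: "cross2 (y - ?p) (?p' - ?p) \<ge> 0" using A pD by auto
    have c2: "cross2 (y - ?p') (?p - ?p') \<ge> 0" using B pD by auto
    have "cross2 (y - ?p') (?p - ?p') = - cross2 (y - ?p) (?p' - ?p)"
      by (simp add: cross2_def algebra_simps)
    then have c0: "cross2 (y - ?p) (?p' - ?p) = 0" using c1 c2 by linarith
    define m where "m = midpoint ?p ?p'"
    have "m \<in> open_segment ?p ?p'" using ne by (simp add: m_def midpoint_in_open_segment)
    then have mi: "m \<in> interior D" using table_props(6)[OF T pD ne] by auto
    have "m - ?p = (1/2) *\<^sub>R (?p' - ?p)" by (simp add: m_def midpoint_def vec2_eq_iff algebra_simps)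
    then have "cross2 (y - ?p) (m - ?p) = 0" using c0 by (simp add: cross2_lin)
    then obtain q where qD: "q \<in> D" and qneg: "cross2 (y - ?p) (q - ?p) < 0"
      using interior_not_on_line[OF mi _ yp] by blast
    then show False using A[OF qD] by linarith
  qed
  show ?thesis using y1 y2 pp by (simp add: vec2_eq_iff)
qed

lemma exists_curv:
  fixes \<phi> :: "real^2 \<Rightarrow> real^2" and \<tau> :: "real^2 \<Rightarrow> real"
  assumes T: "outer_billiard_table D" and cv: "curve_of D g g1 g2"
    and oU: "open U" and neU: "U \<noteq> {}" and cphi: "continuous_on U \<phi>" and iphi: "inj_on \<phi> U"
    and ct: "continuous_on U \<tau>" and phiD: "\<forall>x\<in>U. \<phi> x \<notin> D"
    and gt: "\<forall>x\<in>U. g (\<tau> x) = right_support_point D (\<phi> x)"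
  shows "\<exists>x\<in>U. cross2 (g1 (\<tau> x)) (g2 (\<tau> x)) \<noteq> 0"
proof (rule ccontr)
  assume "\<not> ?thesis"
  then have H: "\<forall>x\<in>U. cross2 (g1 (\<tau> x)) (g2 (\<tau> x)) = 0" by blast
  obtain x where xU: "x \<in> U" using neU by blast
  obtain e where e: "e > 0" "ball x e \<subseteq> U" using oU xU open_contains_ball_eq by blast
  let ?B = "ball x e"
  show False
  proof (cases "\<exists>x'\<in>?B. \<tau> x' \<noteq> \<tau> x")
    case True
    then obtain x' where x': "x' \<in> ?B" "\<tau> x' \<noteq> \<tau> x" by blast
    have conn: "connected (\<tau> ` ?B)"
      by (rule connected_continuous_image[OF continuous_on_subset[OF ct e(2)] connected_ball])
    define a where "a = min (\<tau> x) (\<tau> x')"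
    define b where "b = max (\<tau> x) (\<tau> x')"
    have ab: "a < b" using x'(2) by (auto simp: a_def b_def min_def max_def)
    have inB: "a \<in> \<tau> ` ?B" "b \<in> \<tau> ` ?B" using x'(1) e(1)
      by (auto simp: a_def b_def min_def max_def)
    have "{a..b} \<subseteq> \<tau> ` ?B" by (rule connected_contains_Icc[OF conn inB])
    then have "\<forall>t\<in>{a..b}. cross2 (g1 t) (g2 t) = 0" using H e(2) by blast
    then show False using no_flat[OF T cv ab] by blast
  next
    case False
    then have const: "\<forall>x'\<in>?B. \<tau> x' = \<tau> x" by blast
    define t where "t = \<tau> x"
    define p where "p = g t"
    define v where "v = g1 t"
    have vnz: "v \<noteq> 0" using cv_nz[OF cv] by (simp add: v_def)
    have line: "\<phi> x' = p - (inner (p - \<phi> x') v / inner v v) *\<^sub>R v" if "x' \<in> ?B" for x'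
    proof -
      have x'U: "x' \<in> U" using that e(2) by blast
      have "\<tau> x' = \<tau> x" using const that by blast
      moreover have "right_support_point D (\<phi> x') = g (\<tau> x')" using gt x'U by simp
      ultimately have "right_support_point D (\<phi> x') = g t" by (simp add: t_def)
      then have "cross2 (g1 t) (g t - \<phi> x') = 0" using cv_tangent[OF cv T] phiD x'U by blast
      then have "p - \<phi> x' = (inner (p - \<phi> x') v / inner v v) *\<^sub>R v"
        using cross2_eq_0_parallel[OF _ vnz] by (simp add: p_def v_def)
      then show ?thesis by (simp add: algebra_simps)
    qed
    define psi where "psi x' = inner (\<phi> x') v" for x'
    have cpsi: "continuous_on ?B psi" unfolding psi_def
      by (intro continuous_intros continuous_on_subset[OF cphi e(2)])
    have ipsi: "inj_on psi ?B"
    proof (rule inj_onI)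
      fix x1 x2 assume x12: "x1 \<in> ?B" "x2 \<in> ?B" "psi x1 = psi x2"
      have "inner (p - \<phi> x1) v = inner (p - \<phi> x2) v"
        using x12(3) by (simp add: psi_def inner_diff_left)
      then have "\<phi> x1 = \<phi> x2" using line[OF x12(1)] line[OF x12(2)] by metis
      then show "x1 = x2" using iphi x12 e(2) by (meson inj_onD subsetD)
    qed
    have "DIM(real^2) \<le> DIM(real)"
      by (rule invariance_of_dimension[OF cpsi open_ball ipsi]) (use e(1) in auto)
    then show False by simp
  qed
qed

lemma minor3:
  fixes r1 r2 r3 u1 u2 u3 a b c a' b' c' :: real
  assumes r: "r1 * a + r2 * b + r3 * c = 0" "r1 * a' + r2 * b' + r3 * c' = 0"
    and u: "u1 * a + u2 * b + u3 * c = 0" "u1 * a' + u2 * b' + u3 * c' = 0"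
    and N: "b * c' - c * b' \<noteq> 0 \<or> c * a' - a * c' \<noteq> 0 \<or> a * b' - b * a' \<noteq> 0"
  shows "r1 * u2 - r2 * u1 = 0" "r1 * u3 - r3 * u1 = 0"
proof -
  define N1 where "N1 = b * c' - c * b'"
  define N2 where "N2 = c * a' - a * c'"
  define N3 where "N3 = a * b' - b * a'"
  have "r1 * N2 - r2 * N1 = c*(r1 * a' + r2 * b' + r3 * c') - c'*(r1 * a + r2 * b + r3 * c)"
    unfolding N1_def N2_def by algebra
  then have rr12: "r1 * N2 = r2 * N1" using r by simp
  have "r1 * N3 - r3 * N1 = b'*(r1 * a + r2 * b + r3 * c) - b*(r1 * a' + r2 * b' + r3 * c')"
    unfolding N1_def N3_def by algebra
  then have rr13: "r1 * N3 = r3 * N1" using r by simp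
  have "r2 * N3 - r3 * N2 = a*(r1 * a' + r2 * b' + r3 * c') - a'*(r1 * a + r2 * b + r3 * c)"
    unfolding N2_def N3_def by algebra
  then have rr23: "r2 * N3 = r3 * N2" using r by simp
  have "u1 * N2 - u2 * N1 = c*(u1 * a' + u2 * b' + u3 * c') - c'*(u1 * a + u2 * b + u3 * c)"
    unfolding N1_def N2_def by algebra
  then have su12: "u1 * N2 = u2 * N1" using u by simp
  have "u1 * N3 - u3 * N1 = b'*(u1 * a + u2 * b + u3 * c) - b*(u1 * a' + u2 * b' + u3 * c')"
    unfolding N1_def N3_def by algebra
  then have su13: "u1 * N3 = u3 * N1" using u by simp
  have "u2 * N3 - u3 * N2 = a*(u1 * a' + u2 * b' + u3 * c') - a'*(u1 * a + u2 * b + u3 * c)"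
    unfolding N2_def N3_def by algebra
  then have su23: "u2 * N3 = u3 * N2" using u by simp
  have N': "N1 \<noteq> 0 \<or> N2 \<noteq> 0 \<or> N3 \<noteq> 0" using N by (simp add: N1_def N2_def N3_def)
  have m1: "N1*(r1 * u2 - r2 * u1) = 0" "N2*(r1 * u2 - r2 * u1) = 0" "N3*(r1 * u2 - r2 * u1) = 0"
    using rr12 rr13 rr23 su12 su13 su23 by algebra+
  have m2: "N1*(r1 * u3 - r3 * u1) = 0" "N2*(r1 * u3 - r3 * u1) = 0" "N3*(r1 * u3 - r3 * u1) = 0"
    using rr12 rr13 rr23 su12 su13 su23 by algebra+
  show "r1 * u2 - r2 * u1 = 0" using m1 N' by auto
  show "r1 * u3 - r3 * u1 = 0" using m2 N' by auto
qed


lemma deriv_zero_on_open: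
  assumes "open S" "x \<in> S" "\<forall>y\<in>S. f y = 0" "(f has_derivative f') (at x)"
  shows "f' = (\<lambda>h. 0)"
proof -
  have "((\<lambda>y. 0) has_derivative (\<lambda>h. 0)) (at x)" by (rule has_derivative_const)
  then have "(f has_derivative (\<lambda>h. 0)) (at x)"
    by (rule has_derivative_transform_within_open[OF _ assms(1,2)]) (use assms(3) in simp)
  then show ?thesis using has_derivative_unique assms(4) by blast
qed

lemma deriv_eq_on_open:
  assumes "open S" "x \<in> S" "\<forall>y\<in>S. f y = g y" "(f has_derivative f') (at x)" "(g has_derivative g') (at x)"
  shows "f' = g'"
proof -
  have "(g has_derivative f') (at x)"
    by (rule has_derivative_transform_within_open[OF assms(4) assms(1,2)]) (use assms(3) in simp)
  then show ?thesis using has_derivative_unique assms(5) by blast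
qed

lemma stage:
  fixes \<phi> :: "real^2 \<Rightarrow> real^2"
  assumes T: "outer_billiard_table D" and cv: "curve_of D g g1 g2"
    and oU: "open U" and neU: "U \<noteq> {}" and cphi: "continuous_on U \<phi>" and iphi: "inj_on \<phi> U"
    and phiD: "\<forall>x\<in>U. \<phi> x \<notin> D"
  shows "\<exists>U' \<tau>. open U' \<and> U' \<noteq> {} \<and> U' \<subseteq> U \<and> continuous_on U' (\<lambda>x. \<tau> (\<phi> x)) \<and>
    (\<forall>x\<in>U'. g (\<tau> (\<phi> x)) = right_support_point D (\<phi> x) \<and>
        cross2 (g1 (\<tau> (\<phi> x))) (g2 (\<tau> (\<phi> x))) \<noteq> 0 \<and> (\<exists>L. (\<tau> has_derivative L) (at (\<phi> x)))) \<and>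
    (\<forall>x\<in>U'. \<forall>x'\<in>U'. \<bar>\<tau> (\<phi> x) - \<tau> (\<phi> x')\<bar> < 1)"
proof -
  obtain x0 where x0: "x0 \<in> U" using neU by blast
  have x0D: "\<phi> x0 \<notin> D" using phiD x0 by blast
  have "right_support_point D (\<phi> x0) \<in> frontier D" by (rule rsp_frontier[OF T x0D])
  then obtain t0 where t0: "right_support_point D (\<phi> x0) = g t0" using cv_image[OF cv] by auto
  obtain N \<tau> where N: "open N" "\<phi> x0 \<in> N" "N \<subseteq> - D" "continuous_on N \<tau>" "\<tau> (\<phi> x0) = t0"
    and Nprop: "\<forall>y\<in>N. g (\<tau> y) = right_support_point D y \<and> \<bar>\<tau> y - t0\<bar> \<le> 1/4"
    using local_param[OF T cv x0D t0] by blast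
  define V where "V = \<phi> -` N \<inter> U"
  have oV: "open V" using cphi oU N(1) continuous_on_open_vimage unfolding V_def by blast
  have x0V: "x0 \<in> V" using x0 N(2) by (simp add: V_def)
  have VU: "V \<subseteq> U" by (auto simp: V_def)
  have cphiV: "continuous_on V \<phi>" using cphi VU continuous_on_subset by blast
  have ctau: "continuous_on V (\<lambda>x. \<tau> (\<phi> x))"
    by (rule continuous_on_compose2[OF N(4) cphiV]) (auto simp: V_def)
  have gtV: "\<forall>x\<in>V. g (\<tau> (\<phi> x)) = right_support_point D (\<phi> x)" using Nprop by (auto simp: V_def)
  obtain x1 where x1: "x1 \<in> V" "cross2 (g1 (\<tau> (\<phi> x1))) (g2 (\<tau> (\<phi> x1))) \<noteq> 0"
    using exists_curv[OF T cv oV _ cphiV inj_on_subset[OF iphi VU] ctau _ gtV] x0V phiD VU by blast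
  define k where "k x = cross2 (g1 (\<tau> (\<phi> x))) (g2 (\<tau> (\<phi> x)))" for x
  have ck: "continuous_on V k" unfolding k_def
    by (intro continuous_on_cross2 continuous_on_compose2[OF cv_cont1[OF cv] ctau]
        continuous_on_compose2[OF cv_cont2[OF cv] ctau]) auto
  define U' where "U' = k -` (- {0}) \<inter> V"
  have oU': "open U'" using ck oV continuous_on_open_vimage unfolding U'_def by blast
  have x1U': "x1 \<in> U'" using x1 by (simp add: U'_def k_def)
  have U'V: "U' \<subseteq> V" by (auto simp: U'_def)
  have props: "g (\<tau> (\<phi> x)) = right_support_point D (\<phi> x) \<and>
        cross2 (g1 (\<tau> (\<phi> x))) (g2 (\<tau> (\<phi> x))) \<noteq> 0 \<and> (\<exists>L. (\<tau> has_derivative L) (at (\<phi> x)))"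
    if xU': "x \<in> U'" for x
  proof -
    have xV: "x \<in> V" using xU' U'V by blast
    have kx: "cross2 (g1 (\<tau> (\<phi> x))) (g2 (\<tau> (\<phi> x))) \<noteq> 0" using xU' by (simp add: U'_def k_def)
    have pN: "\<phi> x \<in> N" using xV by (simp add: V_def)
    have "\<exists>L. (\<tau> has_derivative L) (at (\<phi> x))"
      by (rule tau_deriv[OF T cv N(1) N(3) N(4) _ pN kx]) (use Nprop in blast)
    then show ?thesis using gtV xV kx by blast
  qed
  have win: "\<bar>\<tau> (\<phi> x) - \<tau> (\<phi> x')\<bar> < 1" if "x \<in> U'" "x' \<in> U'" for x x'
  proof -
    have "\<phi> x \<in> N" "\<phi> x' \<in> N" using that U'V by (auto simp: V_def)
    then have "\<bar>\<tau> (\<phi> x) - t0\<bar> \<le> 1/4" "\<bar>\<tau> (\<phi> x') - t0\<bar> \<le> 1/4" using Nprop by auto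
    then show ?thesis by linarith
  qed
  show ?thesis
    apply (rule exI[of _ U'], rule exI[of _ \<tau>])
    using oU' x1U' U'V VU continuous_on_subset[OF ctau U'V] props win by blast
qed


lemma par_obtain:
  assumes "cross2 v P = 0" "P \<noteq> 0" "v \<noteq> 0"
  obtains m where "v = m *\<^sub>R P" "m \<noteq> 0"
proof -
  have "cross2 P v = 0" using assms(1) cross2_anti[of P v] by simp
  then have "v = (inner v P / inner P P) *\<^sub>R P" using cross2_eq_0_parallel assms(2) by blast
  moreover then have "inner v P / inner P P \<noteq> 0" using assms(3) by (metis scaleR_zero_left)
  ultimately show ?thesis using that by blast
qed

lemma final_alg:
  fixes v1 v2 v3 w1 w2 P Q :: "real^2" and lam :: real
  assumes nz: "P \<noteq> 0" "Q \<noteq> 0" "v2 \<noteq> 0" "v3 \<noteq> 0" "lam \<noteq> 0"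
    and G2: "cross2 v2 P = 0" and G3: "cross2 v3 Q = 0" and L: "- (P + Q) = lam *\<^sub>R v1"
    and k1: "cross2 v1 w1 \<noteq> 0" and k2: "cross2 v2 w2 \<noteq> 0"
    and M1: "cross2 w1 (- (P + Q)) * cross2 w2 P - cross2 v1 v2 * cross2 v1 v2 = 0"
    and M2: "cross2 w1 (- (P + Q)) * cross2 v2 v3 - cross2 v3 v1 * cross2 v1 v2 = 0"
  shows "cross2 P Q \<noteq> 0 \<and> lam ^ 3 * cross2 w1 v1 = cross2 P Q"
proof -
  obtain m2 where m2: "v2 = m2 *\<^sub>R P" "m2 \<noteq> 0" using par_obtain[OF G2 nz(1) nz(3)] by blast
  obtain m3 where m3: "v3 = m3 *\<^sub>R Q" "m3 \<noteq> 0" using par_obtain[OF G3 nz(2) nz(4)] by blast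
  define C where "C = cross2 P Q"
  define K where "K = cross2 w1 v1"
  define c12 where "c12 = cross2 v1 v2"
  define c13 where "c13 = cross2 v3 v1"
  define c23 where "c23 = cross2 v2 v3"
  define d2 where "d2 = cross2 w2 P"
  have e1: "cross2 w1 (- (P + Q)) = lam * K" unfolding L K_def by (simp add: cross2_lin)
  have e2: "lam * c12 = m2 * C"
  proof -
    have "lam * c12 = cross2 (lam *\<^sub>R v1) v2" by (simp add: c12_def cross2_lin)
    also have "\<dots> = cross2 (- (P + Q)) (m2 *\<^sub>R P)" using L m2(1) by simp
    also have "\<dots> = m2 * C" by (simp add: C_def cross2_lin cross2_anti[of Q P])
    finally show ?thesis .
  qed
  have e3: "lam * c13 = m3 * C"
  proof -
    have "lam * c13 = cross2 v3 (lam *\<^sub>R v1)" by (simp add: c13_def cross2_lin)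
    also have "\<dots> = cross2 (m3 *\<^sub>R Q) (- (P + Q))" using L m3(1) by simp
    also have "\<dots> = m3 * C" by (simp add: C_def cross2_lin cross2_anti[of Q P])
    finally show ?thesis .
  qed
  have e4: "c23 = m2 * m3 * C" unfolding c23_def m2(1) m3(1) by (simp add: C_def cross2_lin)
  have e5: "cross2 w2 v2 = m2 * d2" unfolding m2(1) d2_def by (simp add: cross2_lin)
  have d2nz: "d2 \<noteq> 0" using e5 k2 cross2_anti[of w2 v2] by auto
  have Knz: "K \<noteq> 0" using k1 cross2_anti[of w1 v1] by (simp add: K_def)
  have M1': "lam * K * d2 - c12 * c12 = 0" using M1 e1 by (simp add: c12_def d2_def)
  have M2': "lam * K * c23 - c13 * c12 = 0" using M2 e1 by (simp add: c12_def c13_def c23_def)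
  have "lam^2 * (lam * K * c23 - c13 * c12) = 0" using M2' by simp
  then have "lam^3 * K * (m2 * m3 * C) - (lam * c13) * (lam * c12) = 0"
    unfolding e4[symmetric] by (simp add: power3_eq_cube power2_eq_square algebra_simps)
  then have "m2 * m3 * (C * (lam^3 * K - C)) = 0" unfolding e2 e3 by (simp add: algebra_simps)
  then have key: "C * (lam^3 * K - C) = 0" using m2(2) m3(2) by simp
  have Cnz: "C \<noteq> 0"
  proof
    assume C0: "C = 0"
    then have "c12 = 0" using e2 nz(5) by simp
    then have "lam * K * d2 = 0" using M1' by simp
    then show False using nz(5) Knz d2nz by simp
  qed
  then have "lam^3 * K = C" using key by simp
  then show ?thesis using Cnz by (simp add: C_def K_def)
qed


lemma comp_vd:
  assumes "\<forall>t. (f has_vector_derivative f' t) (at t)" "(\<tau> has_derivative T) (at x)"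
  shows "((\<lambda>y. f (\<tau> y)) has_derivative (\<lambda>h. T h *\<^sub>R f' (\<tau> x))) (at x)"
proof -
  have "(f has_derivative (\<lambda>r. r *\<^sub>R f' (\<tau> x))) (at (\<tau> x))"
    using assms(1) by (simp add: has_vector_derivative_def)
  from diff_chain_at[OF assms(2) this] show ?thesis by (simp add: o_def)
qed

lemma cross2_combo:
  fixes v1 v2 v3 :: "real^2"
  shows "cross2 (a *\<^sub>R v1 - b *\<^sub>R v2 + c *\<^sub>R v3) (a' *\<^sub>R v1 - b' *\<^sub>R v2 + c' *\<^sub>R v3) =
    (a * b' - b * a') * cross2 v1 (- v2) + (a * c' - c * a') * cross2 v1 v3 + (b * c' - c * b') * cross2 (- v2) v3"
  by (simp add: cross2_def algebra_simps)

lemma point_analysis: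
  fixes ga ga1 ga2 gb gb1 gb2 gc gc1 gc2 :: "real \<Rightarrow> real^2" and t1 t2 t3 :: "real^2 \<Rightarrow> real"
  assumes oW: "open W" and xW: "x \<in> W"
    and da: "\<forall>t. (ga has_vector_derivative ga1 t) (at t)" "\<forall>t. (ga1 has_vector_derivative ga2 t) (at t)"
    and db: "\<forall>t. (gb has_vector_derivative gb1 t) (at t)" "\<forall>t. (gb1 has_vector_derivative gb2 t) (at t)"
    and dc: "\<forall>t. (gc has_vector_derivative gc1 t) (at t)" "\<forall>t. (gc1 has_vector_derivative gc2 t) (at t)"
    and dt1: "(t1 has_derivative T1) (at x)" and dt2: "(t2 has_derivative T2) (at x)"
    and dt3: "(t3 has_derivative T3) (at x)"
    and R0: "\<forall>y\<in>W. y = ga (t1 y) - gb (t2 y) + gc (t3 y)"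
    and G1: "\<forall>y\<in>W. cross2 (ga1 (t1 y)) (gb (t2 y) - gc (t3 y)) = 0"
    and G2: "\<forall>y\<in>W. cross2 (gb1 (t2 y)) (gc (t3 y) - ga (t1 y)) = 0"
    and G3: "\<forall>y\<in>W. cross2 (gc1 (t3 y)) (ga (t1 y) - gb (t2 y)) = 0"
  shows "((\<lambda>y. cross2 (gc (t3 y) - ga (t1 y)) (ga (t1 y) - gb (t2 y))) has_derivative (\<lambda>h. 0)) (at x)"
    and "cross2 (ga2 (t1 x)) (gb (t2 x) - gc (t3 x)) * cross2 (gb2 (t2 x)) (gc (t3 x) - ga (t1 x))
          - cross2 (ga1 (t1 x)) (gb1 (t2 x)) * cross2 (ga1 (t1 x)) (gb1 (t2 x)) = 0"
    and "cross2 (ga2 (t1 x)) (gb (t2 x) - gc (t3 x)) * cross2 (gb1 (t2 x)) (gc1 (t3 x))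
          - cross2 (gc1 (t3 x)) (ga1 (t1 x)) * cross2 (ga1 (t1 x)) (gb1 (t2 x)) = 0"
proof -
  define a1 where "a1 = ga (t1 x)"
  define a2 where "a2 = gb (t2 x)"
  define a3 where "a3 = gc (t3 x)"
  define v1 where "v1 = ga1 (t1 x)"
  define v2 where "v2 = gb1 (t2 x)"
  define v3 where "v3 = gc1 (t3 x)"
  define w1 where "w1 = ga2 (t1 x)"
  define w2 where "w2 = gb2 (t2 x)"
  have dA1: "((\<lambda>y. ga (t1 y)) has_derivative (\<lambda>h. T1 h *\<^sub>R v1)) (at x)"
    unfolding v1_def by (rule comp_vd[OF da(1) dt1])
  have dA2: "((\<lambda>y. gb (t2 y)) has_derivative (\<lambda>h. T2 h *\<^sub>R v2)) (at x)"
    unfolding v2_def by (rule comp_vd[OF db(1) dt2])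
  have dA3: "((\<lambda>y. gc (t3 y)) has_derivative (\<lambda>h. T3 h *\<^sub>R v3)) (at x)"
    unfolding v3_def by (rule comp_vd[OF dc(1) dt3])
  have dV1: "((\<lambda>y. ga1 (t1 y)) has_derivative (\<lambda>h. T1 h *\<^sub>R w1)) (at x)"
    unfolding w1_def by (rule comp_vd[OF da(2) dt1])
  have dV2: "((\<lambda>y. gb1 (t2 y)) has_derivative (\<lambda>h. T2 h *\<^sub>R w2)) (at x)"
    unfolding w2_def by (rule comp_vd[OF db(2) dt2])
  have g1x: "cross2 v1 (a2 - a3) = 0" using G1 xW by (simp add: v1_def a2_def a3_def)
  have g2x: "cross2 v2 (a3 - a1) = 0" using G2 xW by (simp add: v2_def a3_def a1_def)
  have g3x: "cross2 v3 (a1 - a2) = 0" using G3 xW by (simp add: v3_def a1_def a2_def)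
  have dC: "((\<lambda>y. cross2 (gc (t3 y) - ga (t1 y)) (ga (t1 y) - gb (t2 y))) has_derivative
      (\<lambda>h. cross2 (a3 - a1) (T1 h *\<^sub>R v1 - T2 h *\<^sub>R v2) + cross2 (T3 h *\<^sub>R v3 - T1 h *\<^sub>R v1) (a1 - a2))) (at x)"
    using has_derivative_cross2[OF has_derivative_diff[OF dA3 dA1] has_derivative_diff[OF dA1 dA2]]
    by (simp add: a1_def a2_def a3_def)
  have "cross2 (a3 - a1) (T1 h *\<^sub>R v1 - T2 h *\<^sub>R v2) + cross2 (T3 h *\<^sub>R v3 - T1 h *\<^sub>R v1) (a1 - a2)
        = T1 h * cross2 v1 (a2 - a3) + T2 h * cross2 v2 (a3 - a1) + T3 h * cross2 v3 (a1 - a2)" for h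
    by (simp add: cross2_def algebra_simps)
  then have "(\<lambda>h. cross2 (a3 - a1) (T1 h *\<^sub>R v1 - T2 h *\<^sub>R v2) + cross2 (T3 h *\<^sub>R v3 - T1 h *\<^sub>R v1) (a1 - a2)) = (\<lambda>h. 0)"
    using g1x g2x g3x by simp
  then show "((\<lambda>y. cross2 (gc (t3 y) - ga (t1 y)) (ga (t1 y) - gb (t2 y))) has_derivative (\<lambda>h. 0)) (at x)"
    using dC by simp
  have dG1: "((\<lambda>y. cross2 (ga1 (t1 y)) (gb (t2 y) - gc (t3 y))) has_derivative
      (\<lambda>h. cross2 v1 (T2 h *\<^sub>R v2 - T3 h *\<^sub>R v3) + cross2 (T1 h *\<^sub>R w1) (a2 - a3))) (at x)"
    using has_derivative_cross2[OF dV1 has_derivative_diff[OF dA2 dA3]]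
    by (simp add: v1_def a2_def a3_def)
  have dG2: "((\<lambda>y. cross2 (gb1 (t2 y)) (gc (t3 y) - ga (t1 y))) has_derivative
      (\<lambda>h. cross2 v2 (T3 h *\<^sub>R v3 - T1 h *\<^sub>R v1) + cross2 (T2 h *\<^sub>R w2) (a3 - a1))) (at x)"
    using has_derivative_cross2[OF dV2 has_derivative_diff[OF dA3 dA1]]
    by (simp add: v2_def a3_def a1_def)
  have zG1: "(\<lambda>h. cross2 v1 (T2 h *\<^sub>R v2 - T3 h *\<^sub>R v3) + cross2 (T1 h *\<^sub>R w1) (a2 - a3)) = (\<lambda>h. 0)"
    by (rule deriv_zero_on_open[OF oW xW G1 dG1])
  have zG2: "(\<lambda>h. cross2 v2 (T3 h *\<^sub>R v3 - T1 h *\<^sub>R v1) + cross2 (T2 h *\<^sub>R w2) (a3 - a1)) = (\<lambda>h. 0)"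
    by (rule deriv_zero_on_open[OF oW xW G2 dG2])
  have dR: "((\<lambda>y. ga (t1 y) - gb (t2 y) + gc (t3 y)) has_derivative (\<lambda>h. T1 h *\<^sub>R v1 - T2 h *\<^sub>R v2 + T3 h *\<^sub>R v3)) (at x)"
    by (intro has_derivative_add has_derivative_diff dA1 dA2 dA3)
  have zR: "(\<lambda>h. h) = (\<lambda>h. T1 h *\<^sub>R v1 - T2 h *\<^sub>R v2 + T3 h *\<^sub>R v3)"
    by (rule deriv_eq_on_open[OF oW xW R0 has_derivative_ident dR])
  define d1 where "d1 = cross2 w1 (a2 - a3)"
  define d2 where "d2 = cross2 w2 (a3 - a1)"
  define c12 where "c12 = cross2 v1 v2"
  define c13 where "c13 = cross2 v3 v1"
  define c23 where "c23 = cross2 v2 v3"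
  have E1: "d1 * T1 h + c12 * T2 h + c13 * T3 h = 0" for h
  proof -
    have "cross2 v1 (T2 h *\<^sub>R v2 - T3 h *\<^sub>R v3) + cross2 (T1 h *\<^sub>R w1) (a2 - a3) = 0"
      using fun_cong[OF zG1, of h] by simp
    moreover have "cross2 v1 (T2 h *\<^sub>R v2 - T3 h *\<^sub>R v3) + cross2 (T1 h *\<^sub>R w1) (a2 - a3) =
        d1 * T1 h + c12 * T2 h + c13 * T3 h"
      by (simp add: d1_def c12_def c13_def cross2_def algebra_simps)
    ultimately show ?thesis by simp
  qed
  have E2: "c12 * T1 h + d2 * T2 h + c23 * T3 h = 0" for h
  proof -
    have "cross2 v2 (T3 h *\<^sub>R v3 - T1 h *\<^sub>R v1) + cross2 (T2 h *\<^sub>R w2) (a3 - a1) = 0"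
      using fun_cong[OF zG2, of h] by simp
    moreover have "cross2 v2 (T3 h *\<^sub>R v3 - T1 h *\<^sub>R v1) + cross2 (T2 h *\<^sub>R w2) (a3 - a1) =
        c12 * T1 h + d2 * T2 h + c23 * T3 h"
      by (simp add: d2_def c12_def c23_def cross2_def algebra_simps)
    ultimately show ?thesis by simp
  qed
  define e1 :: "real^2" where "e1 = axis 1 1"
  define e2 :: "real^2" where "e2 = axis 2 1"
  have ce: "cross2 e1 e2 = 1" by (simp add: e1_def e2_def cross2_def axis_def)
  have he1: "e1 = T1 e1 *\<^sub>R v1 - T2 e1 *\<^sub>R v2 + T3 e1 *\<^sub>R v3" using fun_cong[OF zR, of e1] by simp
  have he2: "e2 = T1 e2 *\<^sub>R v1 - T2 e2 *\<^sub>R v2 + T3 e2 *\<^sub>R v3" using fun_cong[OF zR, of e2] by simp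
  have N: "T2 e1 * T3 e2 - T3 e1 * T2 e2 \<noteq> 0 \<or> T3 e1 * T1 e2 - T1 e1 * T3 e2 \<noteq> 0 \<or> T1 e1 * T2 e2 - T2 e1 * T1 e2 \<noteq> 0"
  proof (rule ccontr)
    assume "\<not> ?thesis"
    then have z: "T2 e1 * T3 e2 - T3 e1 * T2 e2 = 0" "T3 e1 * T1 e2 - T1 e1 * T3 e2 = 0" "T1 e1 * T2 e2 - T2 e1 * T1 e2 = 0"
      by auto
    have "cross2 e1 e2 = 0"
      apply (subst he1, subst he2)
      unfolding cross2_combo using z by (simp add: algebra_simps)
    then show False using ce by simp
  qed
  have m: "d1 * d2 - c12 * c12 = 0" "d1 * c23 - c13 * c12 = 0"
    using minor3[of d1 "T1 e1" c12 "T2 e1" c13 "T3 e1" "T1 e2" "T2 e2" "T3 e2" c12 d2 c23] E1 E2 N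
    by (auto simp: algebra_simps)
  show "cross2 (ga2 (t1 x)) (gb (t2 x) - gc (t3 x)) * cross2 (gb2 (t2 x)) (gc (t3 x) - ga (t1 x))
          - cross2 (ga1 (t1 x)) (gb1 (t2 x)) * cross2 (ga1 (t1 x)) (gb1 (t2 x)) = 0"
    using m(1) by (simp add: d1_def d2_def c12_def w1_def w2_def a1_def a2_def a3_def v1_def v2_def)
  show "cross2 (ga2 (t1 x)) (gb (t2 x) - gc (t3 x)) * cross2 (gb1 (t2 x)) (gc1 (t3 x))
          - cross2 (gc1 (t3 x)) (ga1 (t1 x)) * cross2 (ga1 (t1 x)) (gb1 (t2 x)) = 0"
    using m(2) by (simp add: d1_def c13_def c12_def c23_def w1_def a2_def a3_def v1_def v2_def v3_def)
qed


lemma ob_cont: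
  assumes T: "outer_billiard_table D"
  shows "continuous_on (- D) (outer_billiard D)"
  unfolding outer_billiard_def[abs_def]
  by (intro continuous_intros rsp_cont[OF T])

lemma vec2_ext: "(a::real^2) = b \<longleftrightarrow> a$1 = b$1 \<and> a$2 = b$2" by (rule vec2_eq_iff)

lemma vec_alg0:
  fixes x a b c Y Z :: "real^2"
  assumes "Y = 2 *\<^sub>R a - x" "Z = 2 *\<^sub>R b - Y" "x = 2 *\<^sub>R c - Z"
  shows "x = a - b + c"
  using assms by (auto simp: vec2_eq_iff)

lemma vec_alg1:
  fixes x a b c :: "real^2"
  assumes "x = a - b + c" shows "b - c = a - x"
  using assms by (auto simp: vec2_eq_iff)

lemma vec_alg2:
  fixes x a b c Y :: "real^2"
  assumes "Y = 2 *\<^sub>R a - x" "x = a - b + c" shows "c - a = b - Y"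
  using assms by (auto simp: vec2_eq_iff)

lemma vec_alg3:
  fixes x a b c Z :: "real^2"
  assumes "x = 2 *\<^sub>R c - Z" "x = a - b + c" shows "a - b = c - Z"
  using assms by (auto simp: vec2_eq_iff)

theorem theorem5p3:
  fixes D1 D2 D3 :: "(real^2) set"
  assumes "outer_billiard_table D1" "outer_billiard_table D2" "outer_billiard_table D3"
  shows "interior {x. x \<notin> D1 \<and> outer_billiard D1 x \<notin> D2 \<and>
                     outer_billiard D2 (outer_billiard D1 x) \<notin> D3 \<and>
                     outer_billiard D3 (outer_billiard D2 (outer_billiard D1 x)) = x} = {}"
    (is "interior ?S = {}")
proof (rule ccontr)
  assume ne: "interior ?S \<noteq> {}"
  note T1 = assms(1) and T2 = assms(2) and T3 = assms(3)
  obtain ga ga1 ga2 where cva: "curve_of D1 ga ga1 ga2" using table_curve[OF T1] by blast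
  obtain gb gb1 gb2 where cvb: "curve_of D2 gb gb1 gb2" using table_curve[OF T2] by blast
  obtain gc gc1 gc2 where cvc: "curve_of D3 gc gc1 gc2" using table_curve[OF T3] by blast
  define Y where "Y x = outer_billiard D1 x" for x
  define Z where "Z x = outer_billiard D2 (Y x)" for x
  define U0 where "U0 = interior ?S"
  have oU0: "open U0" by (simp add: U0_def)
  have neU0: "U0 \<noteq> {}" using ne by (simp add: U0_def)
  have U0P: "x \<notin> D1 \<and> Y x \<notin> D2 \<and> Z x \<notin> D3 \<and> outer_billiard D3 (Z x) = x" if "x \<in> U0" for x
    using that interior_subset[of ?S] by (auto simp: U0_def Y_def Z_def)
  have "\<exists>U' \<tau>. open U' \<and> U' \<noteq> {} \<and> U' \<subseteq> U0 \<and> continuous_on U' (\<lambda>x. \<tau> ((\<lambda>x. x) x)) \<and>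
    (\<forall>x\<in>U'. ga (\<tau> ((\<lambda>x. x) x)) = right_support_point D1 ((\<lambda>x. x) x) \<and>
        cross2 (ga1 (\<tau> ((\<lambda>x. x) x))) (ga2 (\<tau> ((\<lambda>x. x) x))) \<noteq> 0 \<and> (\<exists>L. (\<tau> has_derivative L) (at ((\<lambda>x. x) x)))) \<and>
    (\<forall>x\<in>U'. \<forall>x'\<in>U'. \<bar>\<tau> ((\<lambda>x. x) x) - \<tau> ((\<lambda>x. x) x')\<bar> < 1)"
    by (rule stage[of D1 ga ga1 ga2 U0 "\<lambda>x. x", OF T1 cva oU0 neU0 continuous_on_id]) (use U0P in \<open>auto simp: inj_on_def\<close>)
  then obtain U1 \<tau>1 where U1: "open U1" "U1 \<noteq> {}" "U1 \<subseteq> U0" "continuous_on U1 \<tau>1"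
    and U1P: "\<forall>x\<in>U1. ga (\<tau>1 x) = right_support_point D1 x \<and>
        cross2 (ga1 (\<tau>1 x)) (ga2 (\<tau>1 x)) \<noteq> 0 \<and> (\<exists>L. (\<tau>1 has_derivative L) (at x))"
    and U1W: "\<forall>x\<in>U1. \<forall>x'\<in>U1. \<bar>\<tau>1 x - \<tau>1 x'\<bar> < 1"
    by blast
  have U1U0: "\<And>x. x \<in> U1 \<Longrightarrow> x \<in> U0" using U1(3) by blast
  have cY: "continuous_on U1 Y"
  proof -
    have "U1 \<subseteq> - D1" using U1U0 U0P by blast
    then show ?thesis unfolding Y_def[abs_def] using ob_cont[OF T1] continuous_on_subset by blast
  qed
  have iY: "inj_on Y U1"
  proof (rule inj_onI)
    fix x x' assume xx: "x \<in> U1" "x' \<in> U1" "Y x = Y x'"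
    have "x \<notin> D1" "x' \<notin> D1" using U0P U1U0 xx(1,2) by auto
    moreover have "outer_billiard D1 x = outer_billiard D1 x'" using xx(3) by (simp add: Y_def)
    ultimately show "x = x'" using ob_inj[OF T1] by blast
  qed
  have YD2: "\<forall>x\<in>U1. Y x \<notin> D2" using U0P U1U0 by blast
  obtain U2 \<tau>2 where U2: "open U2" "U2 \<noteq> {}" "U2 \<subseteq> U1" "continuous_on U2 (\<lambda>x. \<tau>2 (Y x))"
    and U2P: "\<forall>x\<in>U2. gb (\<tau>2 (Y x)) = right_support_point D2 (Y x) \<and>
        cross2 (gb1 (\<tau>2 (Y x))) (gb2 (\<tau>2 (Y x))) \<noteq> 0 \<and> (\<exists>L. (\<tau>2 has_derivative L) (at (Y x)))"
    and U2W: "\<forall>x\<in>U2. \<forall>x'\<in>U2. \<bar>\<tau>2 (Y x) - \<tau>2 (Y x')\<bar> < 1"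
    using stage[OF T2 cvb U1(1) U1(2) cY iY YD2] by blast
  have U2U1: "\<And>x. x \<in> U2 \<Longrightarrow> x \<in> U1" using U2(3) by blast
  have cZ: "continuous_on U2 Z"
  proof -
    have cY2: "continuous_on U2 Y" using cY U2(3) continuous_on_subset by blast
    have "Y ` U2 \<subseteq> - D2" using U2U1 YD2 by blast
    then show ?thesis unfolding Z_def[abs_def]
      using continuous_on_compose2[OF ob_cont[OF T2] cY2] by blast
  qed
  have iZ: "inj_on Z U2"
  proof (rule inj_onI)
    fix x x' assume xx: "x \<in> U2" "x' \<in> U2" "Z x = Z x'"
    have "Y x \<notin> D2" "Y x' \<notin> D2" using YD2 U2U1 xx(1,2) by auto
    moreover have "outer_billiard D2 (Y x) = outer_billiard D2 (Y x')" using xx(3) by (simp add: Z_def)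
    ultimately have "Y x = Y x'" using ob_inj[OF T2] by blast
    then show "x = x'" using iY xx U2U1 by (meson inj_onD)
  qed
  have ZD3: "\<forall>x\<in>U2. Z x \<notin> D3" using U0P U1U0 U2U1 by blast
  obtain W \<tau>3 where W: "open W" "W \<noteq> {}" "W \<subseteq> U2" "continuous_on W (\<lambda>x. \<tau>3 (Z x))"
    and WP: "\<forall>x\<in>W. gc (\<tau>3 (Z x)) = right_support_point D3 (Z x) \<and>
        cross2 (gc1 (\<tau>3 (Z x))) (gc2 (\<tau>3 (Z x))) \<noteq> 0 \<and> (\<exists>L. (\<tau>3 has_derivative L) (at (Z x)))"
    using stage[OF T3 cvc U2(1) U2(2) cZ iZ ZD3] by blast
  have WU2: "\<And>x. x \<in> W \<Longrightarrow> x \<in> U2" using W(3) by blast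
  define t1 where "t1 = \<tau>1"
  define t2 where "t2 x = \<tau>2 (Y x)" for x
  define t3 where "t3 x = \<tau>3 (Z x)" for x
  have rel: "x \<notin> D1 \<and> Y x \<notin> D2 \<and> Z x \<notin> D3 \<and>
      ga (t1 x) = right_support_point D1 x \<and> gb (t2 x) = right_support_point D2 (Y x) \<and>
      gc (t3 x) = right_support_point D3 (Z x) \<and>
      Y x = 2 *\<^sub>R ga (t1 x) - x \<and> Z x = 2 *\<^sub>R gb (t2 x) - Y x \<and> x = 2 *\<^sub>R gc (t3 x) - Z x" if "x \<in> W" for x
  proof -
    have x2: "x \<in> U2" and x1: "x \<in> U1" and x0: "x \<in> U0" using that WU2 U2U1 U1U0 by auto
    have P0: "x \<notin> D1" "Y x \<notin> D2" "Z x \<notin> D3" "outer_billiard D3 (Z x) = x" using U0P[OF x0] by auto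
    have r1: "ga (t1 x) = right_support_point D1 x" using U1P x1 by (simp add: t1_def)
    have r2: "gb (t2 x) = right_support_point D2 (Y x)" using U2P x2 by (simp add: t2_def)
    have r3: "gc (t3 x) = right_support_point D3 (Z x)" using WP that by (simp add: t3_def)
    show ?thesis using P0 r1 r2 r3 by (simp add: Y_def Z_def outer_billiard_def)
  qed
  have cvds: "\<forall>t. (ga has_vector_derivative ga1 t) (at t)" "\<forall>t. (ga1 has_vector_derivative ga2 t) (at t)"
    "\<forall>t. (gb has_vector_derivative gb1 t) (at t)" "\<forall>t. (gb1 has_vector_derivative gb2 t) (at t)"
    "\<forall>t. (gc has_vector_derivative gc1 t) (at t)" "\<forall>t. (gc1 has_vector_derivative gc2 t) (at t)"
    using cv_deriv[OF cva] cv_deriv2[OF cva] cv_deriv[OF cvb] cv_deriv2[OF cvb]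
      cv_deriv[OF cvc] cv_deriv2[OF cvc] by blast+
  have R0: "\<forall>y\<in>W. y = ga (t1 y) - gb (t2 y) + gc (t3 y)"
  proof
    fix y assume "y \<in> W"
    then have e: "Y y = 2 *\<^sub>R ga (t1 y) - y" "Z y = 2 *\<^sub>R gb (t2 y) - Y y" "y = 2 *\<^sub>R gc (t3 y) - Z y"
      using rel by blast+
    show "y = ga (t1 y) - gb (t2 y) + gc (t3 y)" by (rule vec_alg0[OF e])
  qed
  have tanA: "cross2 (ga1 (t1 y)) (ga (t1 y) - y) = 0" if "y \<in> W" for y
  proof -
    have r: "y \<notin> D1" "right_support_point D1 y = ga (t1 y)" using rel[OF that] by auto
    show ?thesis by (rule cv_tangent[OF cva T1 r])
  qed
  have tanB: "cross2 (gb1 (t2 y)) (gb (t2 y) - Y y) = 0" if "y \<in> W" for y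
  proof -
    have r: "Y y \<notin> D2" "right_support_point D2 (Y y) = gb (t2 y)" using rel[OF that] by auto
    show ?thesis by (rule cv_tangent[OF cvb T2 r])
  qed
  have tanC: "cross2 (gc1 (t3 y)) (gc (t3 y) - Z y) = 0" if "y \<in> W" for y
  proof -
    have r: "Z y \<notin> D3" "right_support_point D3 (Z y) = gc (t3 y)" using rel[OF that] by auto
    show ?thesis by (rule cv_tangent[OF cvc T3 r])
  qed
  have id1: "gb (t2 y) - gc (t3 y) = ga (t1 y) - y" if "y \<in> W" for y
    using R0 that vec_alg1 by blast
  have id2: "gc (t3 y) - ga (t1 y) = gb (t2 y) - Y y" if "y \<in> W" for y
  proof -
    have "Y y = 2 *\<^sub>R ga (t1 y) - y" using rel[OF that] by blast
    then show ?thesis using R0 that vec_alg2 by blast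
  qed
  have id3: "ga (t1 y) - gb (t2 y) = gc (t3 y) - Z y" if "y \<in> W" for y
  proof -
    have "y = 2 *\<^sub>R gc (t3 y) - Z y" using rel[OF that] by blast
    then show ?thesis using R0 that vec_alg3 by blast
  qed
  have G1: "\<forall>y\<in>W. cross2 (ga1 (t1 y)) (gb (t2 y) - gc (t3 y)) = 0" using tanA id1 by simp
  have G2: "\<forall>y\<in>W. cross2 (gb1 (t2 y)) (gc (t3 y) - ga (t1 y)) = 0" using tanB id2 by simp
  have G3: "\<forall>y\<in>W. cross2 (gc1 (t3 y)) (ga (t1 y) - gb (t2 y)) = 0" using tanC id3 by simp
  have derivs: "\<exists>L1 L2 L3. (t1 has_derivative L1) (at x) \<and> (t2 has_derivative L2) (at x) \<and> (t3 has_derivative L3) (at x)"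
    if xW: "x \<in> W" for x
  proof -
    have x2: "x \<in> U2" and x1: "x \<in> U1" using xW WU2 U2U1 by auto
    obtain L1 where L1: "(t1 has_derivative L1) (at x)" using U1P x1 by (auto simp: t1_def)
    have "((\<lambda>y. 2 *\<^sub>R ga (t1 y) - y) has_derivative (\<lambda>h. 2 *\<^sub>R (L1 h *\<^sub>R ga1 (t1 x)) - h)) (at x)"
      by (intro has_derivative_diff has_derivative_scaleR_right comp_vd[OF cvds(1) L1] has_derivative_ident)
    then have dY: "(Y has_derivative (\<lambda>h. 2 *\<^sub>R (L1 h *\<^sub>R ga1 (t1 x)) - h)) (at x)"
      by (rule has_derivative_transform_within_open[OF _ W(1) xW]) (use rel in auto)
    obtain M2 where M2: "(\<tau>2 has_derivative M2) (at (Y x))" using U2P x2 by auto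
    have L2: "(t2 has_derivative (M2 \<circ> (\<lambda>h. 2 *\<^sub>R (L1 h *\<^sub>R ga1 (t1 x)) - h))) (at x)"
      using diff_chain_at[OF dY M2] by (simp add: t2_def[abs_def] o_def)
    have "((\<lambda>y. 2 *\<^sub>R gb (t2 y) - Y y) has_derivative
        (\<lambda>h. 2 *\<^sub>R ((M2 \<circ> (\<lambda>h. 2 *\<^sub>R (L1 h *\<^sub>R ga1 (t1 x)) - h)) h *\<^sub>R gb1 (t2 x)) - (2 *\<^sub>R (L1 h *\<^sub>R ga1 (t1 x)) - h))) (at x)"
      by (intro has_derivative_diff has_derivative_scaleR_right comp_vd[OF cvds(3) L2] dY)
    then have dZ: "(Z has_derivative
        (\<lambda>h. 2 *\<^sub>R ((M2 \<circ> (\<lambda>h. 2 *\<^sub>R (L1 h *\<^sub>R ga1 (t1 x)) - h)) h *\<^sub>R gb1 (t2 x)) - (2 *\<^sub>R (L1 h *\<^sub>R ga1 (t1 x)) - h))) (at x)"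
      by (rule has_derivative_transform_within_open[OF _ W(1) xW]) (use rel in auto)
    obtain M3 where M3: "(\<tau>3 has_derivative M3) (at (Z x))" using WP xW by auto
    have L3: "\<exists>L. (t3 has_derivative L) (at x)"
      using diff_chain_at[OF dZ M3] by (auto simp: t3_def[abs_def] o_def)
    then show ?thesis using L1 L2 by blast
  qed
  obtain xc where xcW: "xc \<in> W" using W(2) by blast
  obtain \<rho> where \<rho>: "\<rho> > 0" "ball xc \<rho> \<subseteq> W" using W(1) xcW open_contains_ball_eq by blast
  define C where "C y = cross2 (gc (t3 y) - ga (t1 y)) (ga (t1 y) - gb (t2 y))" for y
  have dC0: "(C has_derivative (\<lambda>h. 0)) (at y)" if yW: "y \<in> W" for y
  proof -
    obtain L1 L2 L3 where L: "(t1 has_derivative L1) (at y)" "(t2 has_derivative L2) (at y)" "(t3 has_derivative L3) (at y)"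
      using derivs[OF yW] by blast
    show ?thesis unfolding C_def[abs_def]
      by (rule point_analysis(1)[OF W(1) yW cvds L R0 G1 G2 G3])
  qed
  obtain c0 where c0: "\<forall>y\<in>ball xc \<rho>. C y = c0"
    using has_derivative_zero_constant[OF convex_ball, of xc \<rho> C] dC0 \<rho>(2)
      has_derivative_at_withinI by blast
  have AT: "C y \<noteq> 0 \<and> lam ^ 3 * cross2 (ga2 (t1 y)) (ga1 (t1 y)) = C y"
    if yW: "y \<in> W" and lam: "ga (t1 y) - y = lam *\<^sub>R ga1 (t1 y)" for y lam
  proof -
    obtain L1 L2 L3 where L: "(t1 has_derivative L1) (at y)" "(t2 has_derivative L2) (at y)" "(t3 has_derivative L3) (at y)"
      using derivs[OF yW] by blast
    note M = point_analysis(2,3)[OF W(1) yW cvds L R0 G1 G2 G3]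
    have y2: "y \<in> U2" and y1: "y \<in> U1" using yW WU2 U2U1 by auto
    have rl: "y \<notin> D1" "Y y \<notin> D2" "Z y \<notin> D3" "ga (t1 y) = right_support_point D1 y"
      "gb (t2 y) = right_support_point D2 (Y y)" "gc (t3 y) = right_support_point D3 (Z y)"
      using rel[OF yW] by auto
    have inD: "ga (t1 y) \<in> D1" "gb (t2 y) \<in> D2" "gc (t3 y) \<in> D3"
      using rsp_ok[OF T1 rl(1)] rsp_ok[OF T2 rl(2)] rsp_ok[OF T3 rl(3)] rl(4-6) by (auto simp: sp_ok_def)
    have Pnz: "gc (t3 y) - ga (t1 y) \<noteq> 0" using id2[OF yW] inD(2) rl(2) by auto
    have Qnz: "ga (t1 y) - gb (t2 y) \<noteq> 0" using id3[OF yW] inD(3) rl(3) by auto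
    have lnz: "lam \<noteq> 0" using lam inD(1) rl(1) by auto
    have k1: "cross2 (ga1 (t1 y)) (ga2 (t1 y)) \<noteq> 0" using U1P y1 by (simp add: t1_def)
    have k2: "cross2 (gb1 (t2 y)) (gb2 (t2 y)) \<noteq> 0" using U2P y2 by (simp add: t2_def)
    have PQ: "- ((gc (t3 y) - ga (t1 y)) + (ga (t1 y) - gb (t2 y))) = gb (t2 y) - gc (t3 y)"
      by (simp add: vec2_eq_iff)
    have Lq: "- ((gc (t3 y) - ga (t1 y)) + (ga (t1 y) - gb (t2 y))) = lam *\<^sub>R ga1 (t1 y)"
      using PQ id1[OF yW] lam by simp
    have "cross2 (gc (t3 y) - ga (t1 y)) (ga (t1 y) - gb (t2 y)) \<noteq> 0 \<and>
        lam ^ 3 * cross2 (ga2 (t1 y)) (ga1 (t1 y)) = cross2 (gc (t3 y) - ga (t1 y)) (ga (t1 y) - gb (t2 y))"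
      by (rule final_alg[OF Pnz Qnz cv_nz[OF cvb] cv_nz[OF cvc] lnz _ _ Lq k1 k2])
         (use G2 G3 yW M PQ in auto)
    then show ?thesis by (simp add: C_def)
  qed
  define a1 where "a1 = ga (t1 xc)"
  define v1 where "v1 = ga1 (t1 xc)"
  have v1nz: "v1 \<noteq> 0" using cv_nz[OF cva] by (simp add: v1_def)
  define lam0 where "lam0 = inner (a1 - xc) v1 / inner v1 v1"
  have lam0: "a1 - xc = lam0 *\<^sub>R v1"
    using cross2_eq_0_parallel[OF tanA[OF xcW] ] cv_nz[OF cva] by (simp add: a1_def v1_def lam0_def)
  have relc: "xc \<notin> D1" "ga (t1 xc) = right_support_point D1 xc" using rel[OF xcW] by auto
  have okc: "sp_ok D1 xc a1" using rsp_ok[OF T1 relc(1)] relc(2) by (simp add: a1_def)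
  have a1D: "a1 \<in> D1" using okc by (simp add: sp_ok_def)
  have a1xc: "a1 \<noteq> xc" using a1D relc(1) by auto
  define nr where "nr = norm (a1 - xc)"
  have nrpos: "nr > 0" using a1xc by (simp add: nr_def)
  define s where "s = min (1/2) (\<rho> / (2 * nr))"
  have s: "0 < s" "s \<le> 1/2" "s * nr \<le> \<rho> / 2" using \<rho>(1) nrpos
    by (auto simp: s_def min_def field_simps)
  define x' where "x' = xc + s *\<^sub>R (a1 - xc)"
  have "dist xc x' = s * nr" using s(1) by (simp add: x'_def dist_norm nr_def)
  then have x'B: "x' \<in> ball xc \<rho>" using s(3) \<rho>(1) by simp
  then have x'W: "x' \<in> W" using \<rho>(2) by blast
  have x'D: "x' \<notin> D1" using rel[OF x'W] by auto
  have okx': "sp_ok D1 x' a1"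
    unfolding sp_ok_def
  proof (intro conjI ballI a1D)
    fix q assume qD: "q \<in> D1"
    have "cross2 (a1 - xc) (q - xc) \<ge> 0" using okc qD by (simp add: sp_ok_def)
    moreover have "cross2 (a1 - x') (q - x') = (1 - s) * cross2 (a1 - xc) (q - xc)"
      by (simp add: x'_def cross2_def algebra_simps)
    moreover have "1 - s > 0" using s by simp
    ultimately show "cross2 (a1 - x') (q - x') \<ge> 0" by simp
  qed
  have rx': "right_support_point D1 x' = a1" by (rule rsp_eq[OF T1 x'D okx'])
  have tt: "t1 x' = t1 xc"
  proof -
    have "ga (t1 x') = ga (t1 xc)" using rel[OF x'W] rx' by (simp add: a1_def)
    moreover have "\<bar>t1 x' - t1 xc\<bar> < 1" using U1W x'W xcW WU2 U2U1 by (simp add: t1_def)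
    ultimately show ?thesis using cv_inj_window[OF cva] by blast
  qed
  have lam': "ga (t1 x') - x' = ((1 - s) * lam0) *\<^sub>R ga1 (t1 x')"
  proof -
    have "ga (t1 x') - x' = (1 - s) *\<^sub>R (a1 - xc)" using tt by (simp add: a1_def x'_def algebra_simps)
    then show ?thesis using lam0 tt by (simp add: v1_def)
  qed
  have A1: "C xc \<noteq> 0" "lam0 ^ 3 * cross2 (ga2 (t1 xc)) (ga1 (t1 xc)) = C xc"
    using AT[OF xcW lam0[unfolded a1_def v1_def]] by auto
  have A2: "((1 - s) * lam0) ^ 3 * cross2 (ga2 (t1 xc)) (ga1 (t1 xc)) = C x'"
    using AT[OF x'W lam'] tt by simp
  have Ceq: "C x' = C xc" using c0 x'B \<rho>(1) by simp
  define K where "K = cross2 (ga2 (t1 xc)) (ga1 (t1 xc))"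
  have "((1 - s) * lam0) ^ 3 * K = (1 - s) ^ 3 * (lam0 ^ 3 * K)" by (simp add: power_mult_distrib)
  then have h: "(1 - s) ^ 3 * C xc = C xc" using A1(2) A2 Ceq by (simp add: K_def)
  have "((1 - s) ^ 3 - 1) * C xc = 0" using h by (simp add: algebra_simps)
  then have "(1 - s) ^ 3 = 1" using A1(1) by simp
  moreover have "(1 - s) ^ 3 < 1" using s by (simp add: power_less_one_iff)
  ultimately show False by simp
qed


end
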